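(* Let $w$ satisfy (A1), fix $\delta\in(0,1/2)$, and suppose (A2) holds: $a_\delta(x)\ge \int_0^1 \widetilde w_\delta(x,y)\,dy$ for all $x\in\Omega$. Then for every $f\in L^2(\Omega)$, $|(\widetilde{\mathcal N}_\delta)^{-1}f(x)|\le 2\,(\widetilde{\mathcal P}_\delta)^{-1}|f|(x)$ for a.e. $x\in\Omega$.
   Context: Throughout, $\Omega=(0,1)$, $\delta\in(0,1/2)$, and $\chi_A$ denotes the indicator function of a set $A$. A function $w:[0,\infty)\to[0,\infty)$ satisfies (A1) if $w$ is continuous and nonincreasing on $[0,1)$, positive on $(0,1)$, $w(r)=0$ for $r\ge 1$, and $\int_{\mathbb R} w(|z|)|z|^2\,dz=2$. Set $w_\delta(x,y)=\delta^{-3}w(|x-y|/\delta)$, $a_\delta(x)=\int_0^1 w_\delta(x,y)\,dy$, and $b_\delta(x)=\frac{2}{(x+\delta)^2}\int_{x-\delta}^{0}(x-y)w_\delta(x,y)\,dy$ for $x\in(0,\delta)$, $b_\delta(x)=\frac{2}{(1-x+\delta)^2}\int_{1}^{x+\delta}(y-x)w_\delta(x,y)\,dy$ for $x\in(1-\delta,1)$, and $b_\delta(x)=0$ otherwise. The operator $\widetilde{\mathcal N}_\delta$ on $L^2(\Omega)$ is $\widetilde{\mathcal N}_\delta u(x)=a_\delta(x)u(x)-\int_0^1 u(y)\big(w_\delta(x,y)-b_\delta(x)\chi_{[0,\delta]}(|y-x|)\big)\,dy$. Define $\widetilde w_\delta(x,y)=|w_\delta(x,y)-b_\delta(x)\chi_{(0,\delta)}(|y-x|)|$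 and $\widetilde{\mathcal P}_\delta u(x)=a_\delta(x)u(x)-\int_0^1 u(y)\widetilde w_\delta(x,y)\,dy$. Under the hypotheses both operators are invertible on $L^2(\Omega)$. *)

theory Defs
  imports "HOL-Analysis.Analysis"
begin

definition Omega :: "real set" where "Omega = {0<..<1}"

definition A1 :: "(real \<Rightarrow> real) \<Rightarrow> bool" where
  "A1 w \<longleftrightarrow>
     (\<forall>r\<ge>0. w r \<ge> 0) \<and>
     continuous_on {0..<1} w \<and>
     (\<forall>r s. 0 \<le> r \<and> r \<le> s \<and> s < 1 \<longrightarrow> w s \<le> w r) \<and>
     (\<forall>r. 0 < r \<and> r < 1 \<longrightarrow> w r > 0) \<and>
     (\<forall>r\<ge>1. w r = 0) \<and>
     integrable lebesgue (\<lambda>z. w \<bar>z\<bar> * \<bar>z\<bar>^2) \<and>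
     (\<integral>z. w \<bar>z\<bar> * \<bar>z\<bar>^2 \<partial>lebesgue) = 2"

definition wd :: "(real \<Rightarrow> real) \<Rightarrow> real \<Rightarrow> real \<Rightarrow> real \<Rightarrow> real" where
  "wd w \<delta> x y = w (\<bar>x - y\<bar> / \<delta>) / \<delta>^3"

definition ad :: "(real \<Rightarrow> real) \<Rightarrow> real \<Rightarrow> real \<Rightarrow> real" where
  "ad w \<delta> x = set_lebesgue_integral lebesgue {0<..<1} (\<lambda>y. wd w \<delta> x y)"

definition bd :: "(real \<Rightarrow> real) \<Rightarrow> real \<Rightarrow> real \<Rightarrow> real" where
  "bd w \<delta> x =
     (if 0 < x \<and> x < \<delta> then
        2 / (x + \<delta>)^2 * set_lebesgue_integral lebesgue {x - \<delta>..0} (\<lambda>y. (x - y) * wd w \<delta> x y)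
      else if 1 - \<delta> < x \<and> x < 1 then
        2 / (1 - x + \<delta>)^2 * set_lebesgue_integral lebesgue {1..x + \<delta>} (\<lambda>y. (y - x) * wd w \<delta> x y)
      else 0)"

definition wtd :: "(real \<Rightarrow> real) \<Rightarrow> real \<Rightarrow> real \<Rightarrow> real \<Rightarrow> real" where
  "wtd w \<delta> x y = \<bar>wd w \<delta> x y - bd w \<delta> x * indicator {0<..<\<delta>} \<bar>y - x\<bar>\<bar>"

definition Nt :: "(real \<Rightarrow> real) \<Rightarrow> real \<Rightarrow> (real \<Rightarrow> real) \<Rightarrow> real \<Rightarrow> real" where
  "Nt w \<delta> u x = ad w \<delta> x * u x -
     set_lebesgue_integral lebesgue {0<..<1}
       (\<lambda>y. u y * (wd w \<delta> x y - bd w \<delta> x * indicator {0..\<delta>} \<bar>y - x\<bar>))"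

definition Pt :: "(real \<Rightarrow> real) \<Rightarrow> real \<Rightarrow> (real \<Rightarrow> real) \<Rightarrow> real \<Rightarrow> real" where
  "Pt w \<delta> u x = ad w \<delta> x * u x -
     set_lebesgue_integral lebesgue {0<..<1} (\<lambda>y. u y * wtd w \<delta> x y)"

definition L2_Omega :: "(real \<Rightarrow> real) \<Rightarrow> bool" where
  "L2_Omega u \<longleftrightarrow> set_borel_measurable lebesgue Omega u \<and>
     set_integrable lebesgue Omega (\<lambda>x. (u x)^2)"

end

theory Submission
  imports Defs
begin

lemma to_leb: "f \<in> borel_measurable borel \<Longrightarrow> f \<in> borel_measurable lebesgue"
  by (metis measurable_completion measurable_lborel2)

lemma bdd_set_integrable:
  fixes f :: "real \<Rightarrow> real"
  assumes "f \<in> borel_measurable lebesgue" "\<And>y. y \<in> A \<Longrightarrow> \<bar>f y\<bar> \<le> C"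
    "A \<in> sets lebesgue" "emeasure lebesgue A < \<infinity>"
  shows "set_integrable lebesgue A f"
  unfolding set_integrable_def
  by (rule integrableI_bounded_set_indicator[where B=C]) (use assms in auto)

lemma integral_lin:
  fixes p q c :: real assumes "p \<le> q"
  shows "(LINT y:{p..q}|lebesgue. (c - y)) = c*(q-p) - (q^2-p^2)/2"
proof -
  have i: "set_integrable lebesgue {p..q} (\<lambda>y. c - y)"
    by (intro absolutely_integrable_continuous_real continuous_intros)
  have "(LINT y:{p..q}|lebesgue. (c - y)) = integral {p..q} (\<lambda>y. c - y)"
    by (rule set_lebesgue_integral_eq_integral(2)[OF i])
  also have "\<dots> = integral {p..q} (\<lambda>y. c) - integral {p..q} (\<lambda>y. y)"
    by (rule integral_diff) (auto intro: ident_integrable_on)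
  also have "\<dots> = c*(q-p) - (q^2-p^2)/2" using assms by simp
  finally show ?thesis .
qed

lemma integral_lin2:
  fixes p q c :: real assumes "p \<le> q"
  shows "(LINT y:{p..q}|lebesgue. (y - c)) = (q^2-p^2)/2 - c*(q-p)"
proof -
  have i: "set_integrable lebesgue {p..q} (\<lambda>y. y - c)"
    by (intro absolutely_integrable_continuous_real continuous_intros)
  have "(LINT y:{p..q}|lebesgue. (y - c)) = integral {p..q} (\<lambda>y. y - c)"
    by (rule set_lebesgue_integral_eq_integral(2)[OF i])
  also have "\<dots> = integral {p..q} (\<lambda>y. y) - integral {p..q} (\<lambda>y. c)"
    by (rule integral_diff) (auto intro: ident_integrable_on)
  also have "\<dots> = (q^2-p^2)/2 - c*(q-p)" using assms by simp
  finally show ?thesis .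
qed

locale S =
  fixes w :: "real \<Rightarrow> real" and d :: real
  assumes A1w: "A1 w" and dpos: "0 < d" and dlt: "d < 1/2"
begin

lemma w_nn: "0 \<le> r \<Longrightarrow> 0 \<le> w r"
  using A1w unfolding A1_def by auto

lemma w_mono: "0 \<le> r \<Longrightarrow> r \<le> s \<Longrightarrow> w s \<le> w r"
proof -
  assume h: "0 \<le> r" "r \<le> s"
  show "w s \<le> w r"
  proof (cases "s < 1")
    case True then show ?thesis using A1w h unfolding A1_def by auto
  next
    case False then have "w s = 0" using A1w unfolding A1_def by auto
    then show ?thesis using w_nn h by auto
  qed
qed

lemma w_pos: "0 < r \<Longrightarrow> r < 1 \<Longrightarrow> 0 < w r"
  using A1w unfolding A1_def by auto

lemma w_one: "1 \<le> r \<Longrightarrow> w r = 0"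
  using A1w unfolding A1_def by auto

lemma w_le0: "0 \<le> r \<Longrightarrow> w r \<le> w 0"
  using w_mono[of 0 r] by simp

lemma w0_pos: "0 < w 0"
  using w_pos[of "1/2"] w_le0[of "1/2"] by simp

lemma w_meas: "(\<lambda>r. indicator {0..<1} r *\<^sub>R w r) \<in> borel_measurable borel"
  using A1w unfolding A1_def
  by (intro borel_measurable_continuous_on_indicator) auto

lemma wd_alt: "wd w d x y = (indicator {0..<1} (\<bar>x-y\<bar>/d) *\<^sub>R w (\<bar>x-y\<bar>/d)) / d^3"
  unfolding wd_def using w_one dpos by (auto simp: indicator_def)

lemma wd_meas: "(\<lambda>y. wd w d x y) \<in> borel_measurable borel"
proof -
  have "(\<lambda>y. (\<lambda>r. indicator {0..<1} r *\<^sub>R w r) (\<bar>x-y\<bar>/d) / d^3) \<in> borel_measurable borel"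
    by (intro borel_measurable_divide measurable_compose[OF _ w_meas]) auto
  then show ?thesis unfolding wd_alt by simp
qed

lemma wd_nn: "0 \<le> wd w d x y"
  unfolding wd_def using w_nn dpos by auto

lemma wd_le: "wd w d x y \<le> w 0 / d^3"
  unfolding wd_def using w_le0[of "\<bar>x-y\<bar>/d"] dpos by (auto intro!: divide_right_mono)

lemma wd_zero: "d \<le> \<bar>x - y\<bar> \<Longrightarrow> wd w d x y = 0"
  unfolding wd_def using w_one dpos by auto

lemma wd_mono: "\<bar>x - y\<bar> \<le> \<bar>x' - y'\<bar> \<Longrightarrow> wd w d x' y' \<le> wd w d x y"
  unfolding wd_def using dpos
  by (intro divide_right_mono w_mono) (auto intro: divide_right_mono)

lemma wd_lb: "\<bar>x - y\<bar> \<le> t * d \<Longrightarrow> w t / d^3 \<le> wd w d x y"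
proof -
  assume h: "\<bar>x - y\<bar> \<le> t * d"
  have "\<bar>x - y\<bar>/d \<le> t" using h dpos by (simp add: divide_le_eq)
  then show ?thesis unfolding wd_def using dpos
    by (intro divide_right_mono w_mono) auto
qed

lemma wd_sym: "wd w d x y = wd w d y x"
  unfolding wd_def by (simp add: abs_minus_commute)

lemma wtd_meas: "(\<lambda>y. wtd w d x y) \<in> borel_measurable borel"
  unfolding wtd_def using wd_meas[of x] by measurable

end

lemma alg1: "(a::real) + b > 0 \<Longrightarrow> 2/(a+b)^2 * ((b^2-a^2)/2 * c) = c*((b-a)/(b+a))"
  by (simp add: divide_simps power2_eq_square) algebra

lemma set_int_ind_const:
  fixes c :: real
  assumes "I \<subseteq> A" "I \<in> sets lebesgue" "emeasure lebesgue I < \<infinity>"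
  shows "(LINT y:A|lebesgue. indicator I y * c) = measure lebesgue I * c"
    and "set_integrable lebesgue A (\<lambda>y. indicator I y * c)"
proof -
  have e: "(\<lambda>y. indicator A y *\<^sub>R (indicator I y * c)) = (\<lambda>y. indicator I y *\<^sub>R c)"
    using assms(1) by (auto simp: indicator_def fun_eq_iff)
  show "(LINT y:A|lebesgue. indicator I y * c) = measure lebesgue I * c"
    unfolding set_lebesgue_integral_def e
    using set_integral_const[OF assms(2), of c] assms(3)
    by (simp add: set_lebesgue_integral_def)
  show "set_integrable lebesgue A (\<lambda>y. indicator I y * c)"
    unfolding set_integrable_def e
    using assms(2,3) by (intro integrable_scaleR_left) (auto simp: less_top[symmetric])
qed

lemma set_int_nonneg:
  fixes f :: "'a \<Rightarrow> real"
  shows "(\<And>y. y \<in> A \<Longrightarrow> 0 \<le> f y) \<Longrightarrow> 0 \<le> set_lebesgue_integral M A f"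
  unfolding set_lebesgue_integral_def by (intro integral_nonneg_AE AE_I2) (auto simp: indicator_def)

context S begin

lemma bd_left: "0<x \<Longrightarrow> x<d \<Longrightarrow> bd w d x = 2/(x+d)^2 * (LINT y:{x-d..0}|lebesgue. (x-y)*wd w d x y)"
  by (simp add: bd_def)

lemma bd_right: "1-d<x \<Longrightarrow> x<1 \<Longrightarrow> bd w d x = 2/(1-x+d)^2 * (LINT y:{1..x+d}|lebesgue. (y-x)*wd w d x y)"
  using dlt by (simp add: bd_def)

lemma bd_mid: "d \<le> x \<Longrightarrow> x \<le> 1-d \<Longrightarrow> bd w d x = 0"
  by (simp add: bd_def)

lemma intg_lin_wd:
  "set_integrable lebesgue {p..q} (\<lambda>y. (c-y)*wd w d x y)"
proof (rule bdd_set_integrable[where C="(\<bar>c - p\<bar> + \<bar>q - p\<bar>) * (w 0/d^3)"])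
  show "(\<lambda>y. (c - y) * wd w d x y) \<in> borel_measurable lebesgue"
    using wd_meas[of x] by (intro to_leb) measurable
  fix y assume y: "y \<in> {p..q}"
  have "\<bar>(c - y) * wd w d x y\<bar> = \<bar>c - y\<bar> * wd w d x y" using wd_nn by (simp add: abs_mult)
  also have "\<dots> \<le> (\<bar>c - p\<bar> + \<bar>q - p\<bar>) * (w 0/d^3)"
    using y wd_le[of x y] wd_nn[of x y] by (intro mult_mono) auto
  finally show "\<bar>(c - y) * wd w d x y\<bar> \<le> (\<bar>c - p\<bar> + \<bar>q - p\<bar>) * (w 0 / d ^ 3)" .
next
  show "emeasure lebesgue {p..q} < \<infinity>" by (cases "p \<le> q") auto
qed auto

lemma intg_lin_wd2:
  "set_integrable lebesgue {p..q} (\<lambda>y. (y-c)*wd w d x y)"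
proof -
  have "set_integrable lebesgue {p..q} (\<lambda>y. (-1) * ((c-y)*wd w d x y))"
    using intg_lin_wd by (intro set_integrable_mult_right) auto
  then show ?thesis by (simp add: algebra_simps)
qed

lemma bd_ub_left:
  assumes x: "0<x" "x<d"
  shows "bd w d x \<le> w (x/d) / d^3 * ((d-x)/(d+x))"
proof -
  have "(LINT y:{x-d..0}|lebesgue. (x-y)*wd w d x y) \<le> (LINT y:{x-d..0}|lebesgue. (x-y)*(w (x/d) / d^3))"
  proof (rule set_integral_mono[OF intg_lin_wd])
    show "set_integrable lebesgue {x - d..0} (\<lambda>y. (x - y) * (w (x / d) / d ^ 3))"
      by (intro set_integrable_mult_left absolutely_integrable_continuous_real continuous_intros)
    fix y assume y: "y \<in> {x-d..0}"
    have "wd w d x y \<le> w (x/d) / d^3"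
      unfolding wd_def using dpos x y
      by (intro divide_right_mono w_mono) (auto intro!: divide_right_mono)
    then show "(x - y) * wd w d x y \<le> (x - y) * (w (x / d) / d ^ 3)"
      using y x by (intro mult_left_mono) auto
  qed
  also have "\<dots> = (LINT y:{x-d..0}|lebesgue. (x-y)) * (w (x/d) / d^3)"
    by simp
  also have "\<dots> = (d^2 - x^2)/2 * (w (x/d) / d^3)"
  proof -
    have h: "(LINT y:{x-d..0}|lebesgue. (x-y)) = (d^2 - x^2)/2"
      using integral_lin[of "x-d" 0 x] x by (simp add: power2_eq_square field_simps)
    show ?thesis by (simp only: h)
  qed
  finally have I: "(LINT y:{x-d..0}|lebesgue. (x-y)*wd w d x y) \<le> (d^2 - x^2)/2 * (w (x/d) / d^3)" .
  have "bd w d x \<le> 2/(x+d)^2 * ((d^2 - x^2)/2 * (w (x/d) / d^3))"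
    unfolding bd_left[OF x] by (rule mult_left_mono[OF I]) simp
  also have "\<dots> = w (x/d) / d^3 * ((d-x)/(d+x))"
    using x by (intro alg1) simp
  finally show ?thesis .
qed

lemma bd_ub_right:
  assumes x: "1-d<x" "x<1"
  shows "bd w d x \<le> w ((1-x)/d) / d^3 * ((d-(1-x))/(d+(1-x)))"
proof -
  have "(LINT y:{1..x+d}|lebesgue. (y-x)*wd w d x y) \<le> (LINT y:{1..x+d}|lebesgue. (y-x)*(w ((1-x)/d) / d^3))"
  proof (rule set_integral_mono[OF intg_lin_wd2])
    show "set_integrable lebesgue {1..x+d} (\<lambda>y. (y-x) * (w ((1-x) / d) / d ^ 3))"
      by (intro set_integrable_mult_left absolutely_integrable_continuous_real continuous_intros)
    fix y assume y: "y \<in> {1..x+d}"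
    have "wd w d x y \<le> w ((1-x)/d) / d^3"
      unfolding wd_def using dpos x y
      by (intro divide_right_mono w_mono) (auto intro!: divide_right_mono)
    then show "(y-x) * wd w d x y \<le> (y-x) * (w ((1-x) / d) / d ^ 3)"
      using y x by (intro mult_left_mono) auto
  qed
  also have "\<dots> = (LINT y:{1..x+d}|lebesgue. (y-x)) * (w ((1-x)/d) / d^3)"
    by simp
  also have "\<dots> = (d^2 - (1-x)^2)/2 * (w ((1-x)/d) / d^3)"
  proof -
    have h: "(LINT y:{1..x+d}|lebesgue. (y-x)) = (d^2 - (1-x)^2)/2"
      using integral_lin2[of 1 "x+d" x] x by (simp add: power2_eq_square field_simps)
    show ?thesis by (simp only: h)
  qed
  finally have I: "(LINT y:{1..x+d}|lebesgue. (y-x)*wd w d x y) \<le> (d^2 - (1-x)^2)/2 * (w ((1-x)/d) / d^3)" .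
  have "bd w d x \<le> 2/(1-x+d)^2 * ((d^2 - (1-x)^2)/2 * (w ((1-x)/d) / d^3))"
    unfolding bd_right[OF x] by (rule mult_left_mono[OF I]) simp
  also have "\<dots> = w ((1-x)/d) / d^3 * ((d-(1-x))/(d+(1-x)))"
    using x dpos by (intro alg1) simp
  finally show ?thesis .
qed

lemma bd_nn: "0 \<le> bd w d x"
proof -
  have L: "0 \<le> (LINT y:{x-d..0}|lebesgue. (x-y)*wd w d x y)" if "0 < x"
    using that wd_nn by (intro set_int_nonneg) auto
  have R: "0 \<le> (LINT y:{1..x+d}|lebesgue. (y-x)*wd w d x y)" if "x < 1"
    using that wd_nn by (intro set_int_nonneg) auto
  show ?thesis unfolding bd_def using L R by auto
qed

definition C0 where "C0 = w 0 / d^3"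

lemma C0_pos: "0 < C0" unfolding C0_def using w0_pos dpos by simp

lemma bd_le: "bd w d x \<le> C0"
proof -
  consider "0<x \<and> x<d" | "1-d<x \<and> x<1" | "\<not>(0<x \<and> x<d) \<and> \<not>(1-d<x \<and> x<1)" by blast
  then show ?thesis
  proof cases
    case 1
    then have "bd w d x \<le> w (x/d) / d^3 * ((d-x)/(d+x))" using bd_ub_left by auto
    also have "\<dots> \<le> w 0 / d^3 * 1"
      using 1 dpos w_le0[of "x/d"] w_nn[of "x/d"]
      by (intro mult_mono divide_right_mono) auto
    finally show ?thesis unfolding C0_def by simp
  next
    case 2
    then have "bd w d x \<le> w ((1-x)/d) / d^3 * ((d-(1-x))/(d+(1-x)))" using bd_ub_right by auto
    also have "\<dots> \<le> w 0 / d^3 * 1"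
      using 2 dpos w_le0[of "(1-x)/d"] w_nn[of "(1-x)/d"]
      by (intro mult_mono divide_right_mono) auto
    finally show ?thesis unfolding C0_def by simp
  next
    case 3 then show ?thesis unfolding bd_def using C0_pos by auto
  qed
qed

end

lemma lin3: "(a::real) \<le> W \<Longrightarrow> b \<le> a/3 \<Longrightarrow> k = a - a/3 \<Longrightarrow> c \<le> b \<Longrightarrow> k \<le> W - c" by linarith

lemma const_intg: "set_integrable lebesgue {0<..<1::real} (\<lambda>y. c::real)"
  by (intro bdd_set_integrable[where C="\<bar>c\<bar>"]) auto

context S begin

definition bl where "bl = (3/64) * w (7/8) / d^3"

lemma bl_pos: "0 < bl" unfolding bl_def using w_pos[of "7/8"] dpos by simp

lemma wd_intg: "set_integrable lebesgue A (\<lambda>y. wd w d x y)" if "A \<in> sets lebesgue" "emeasure lebesgue A < \<infinity>"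
proof (rule bdd_set_integrable[where C=C0])
  show "wd w d x \<in> borel_measurable lebesgue" using to_leb[OF wd_meas] .
qed (use that wd_nn wd_le in \<open>auto simp: C0_def\<close>)

lemma bd_lb_left:
  assumes x: "0 < x" "x \<le> 3*d/4"
  shows "bl \<le> bd w d x"
proof -
  let ?I = "{x - 7*d/8 .. x - 3*d/4}"
  let ?c = "(3*d/4) * (w (7/8) / d^3)"
  have sub: "?I \<subseteq> {x-d..0}" using x dpos by auto
  have "(LINT y:{x-d..0}|lebesgue. indicator ?I y * ?c) \<le> (LINT y:{x-d..0}|lebesgue. (x-y)*wd w d x y)"
  proof (rule set_integral_mono[OF set_int_ind_const(2)[OF sub] intg_lin_wd])
    fix y assume y: "y \<in> {x-d..0}"
    show "indicator ?I y * ?c \<le> (x - y) * wd w d x y"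
    proof (cases "y \<in> ?I")
      case True
      have a: "w (7/8) / d^3 \<le> wd w d x y" using True dpos by (intro wd_lb) auto
      have "?c \<le> (x - y) * wd w d x y"
        by (rule mult_mono) (use a True dpos w_nn[of "7/8"] in auto)
      then show ?thesis using True by simp
    next
      case False then show ?thesis using y x wd_nn[of x y] by auto
    qed
  qed (use dpos in auto)
  moreover have "(LINT y:{x-d..0}|lebesgue. indicator ?I y * ?c) = (d/8) * ?c"
  proof -
    have m: "measure lebesgue ?I = d/8" using dpos by simp
    have "(LINT y:{x-d..0}|lebesgue. indicator ?I y * ?c) = measure lebesgue ?I * ?c"
      by (rule set_int_ind_const(1)[OF sub]) (use dpos in auto)
    then show ?thesis by (simp only: m)
  qed
  ultimately have I: "(d/8) * ?c \<le> (LINT y:{x-d..0}|lebesgue. (x-y)*wd w d x y)" by simp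
  have "(x+d)^2 \<le> (2*d)^2" using x dpos by (intro power_mono) auto
  then have "2/(2*d)^2 \<le> 2/(x+d)^2" using x dpos by (intro divide_left_mono) auto
  then have "1/(2*d^2) \<le> 2/(x+d)^2" by (simp add: power2_eq_square)
  have "bl = 1/(2*d^2) * ((d/8) * ?c)" unfolding bl_def using dpos by (simp add: field_simps power2_eq_square)
  also have "\<dots> \<le> 2/(x+d)^2 * (LINT y:{x-d..0}|lebesgue. (x-y)*wd w d x y)"
    using \<open>1/(2*d^2) \<le> 2/(x+d)^2\<close> I dpos w_nn[of "7/8"] by (intro mult_mono) auto
  also have "\<dots> = bd w d x" using bd_left x dpos by simp
  finally show ?thesis .
qed

lemma bd_lb_right:
  assumes x: "1 - 3*d/4 \<le> x" "x < 1"
  shows "bl \<le> bd w d x"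
proof -
  let ?I = "{x + 3*d/4 .. x + 7*d/8}"
  let ?c = "(3*d/4) * (w (7/8) / d^3)"
  have sub: "?I \<subseteq> {1..x+d}" using x dpos by auto
  have "(LINT y:{1..x+d}|lebesgue. indicator ?I y * ?c) \<le> (LINT y:{1..x+d}|lebesgue. (y-x)*wd w d x y)"
  proof (rule set_integral_mono[OF set_int_ind_const(2)[OF sub] intg_lin_wd2])
    fix y assume y: "y \<in> {1..x+d}"
    show "indicator ?I y * ?c \<le> (y - x) * wd w d x y"
    proof (cases "y \<in> ?I")
      case True
      have a: "w (7/8) / d^3 \<le> wd w d x y" using True dpos by (intro wd_lb) auto
      have "?c \<le> (y - x) * wd w d x y"
        by (rule mult_mono) (use a True dpos w_nn[of "7/8"] in auto)
      then show ?thesis using True by simp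
    next
      case False then show ?thesis using y x wd_nn[of x y] by auto
    qed
  qed (use dpos in auto)
  moreover have "(LINT y:{1..x+d}|lebesgue. indicator ?I y * ?c) = (d/8) * ?c"
  proof -
    have m: "measure lebesgue ?I = d/8" using dpos by simp
    have "(LINT y:{1..x+d}|lebesgue. indicator ?I y * ?c) = measure lebesgue ?I * ?c"
      by (rule set_int_ind_const(1)[OF sub]) (use dpos in auto)
    then show ?thesis by (simp only: m)
  qed
  ultimately have I: "(d/8) * ?c \<le> (LINT y:{1..x+d}|lebesgue. (y-x)*wd w d x y)" by simp
  have "(1-x+d)^2 \<le> (2*d)^2" using x dpos by (intro power_mono) auto
  then have "2/(2*d)^2 \<le> 2/(1-x+d)^2" using x dpos by (intro divide_left_mono) auto
  then have "1/(2*d^2) \<le> 2/(1-x+d)^2" by (simp add: power2_eq_square)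
  have "bl = 1/(2*d^2) * ((d/8) * ?c)" unfolding bl_def using dpos by (simp add: field_simps power2_eq_square)
  also have "\<dots> \<le> 2/(1-x+d)^2 * (LINT y:{1..x+d}|lebesgue. (y-x)*wd w d x y)"
    using \<open>1/(2*d^2) \<le> 2/(1-x+d)^2\<close> I dpos w_nn[of "7/8"] by (intro mult_mono) auto
  also have "\<dots> = bd w d x" using bd_right x dpos by simp
  finally show ?thesis .
qed

lemma wd_ge_bd_left: "0 < x \<Longrightarrow> x < d \<Longrightarrow> \<bar>x - y\<bar> \<le> x \<Longrightarrow> bd w d x \<le> wd w d x y"
proof -
  assume x: "0 < x" "x < d" and y: "\<bar>x - y\<bar> \<le> x"
  have "bd w d x \<le> w (x/d) / d^3 * ((d-x)/(d+x))" using bd_ub_left x by auto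
  also have "\<dots> \<le> w (x/d) / d^3 * 1" using x dpos w_nn[of "x/d"] by (intro mult_left_mono) auto
  also have "\<dots> \<le> wd w d x y" using y dpos by (simp add: wd_lb)
  finally show ?thesis .
qed

lemma wd_ge_bd_right: "1-d < x \<Longrightarrow> x < 1 \<Longrightarrow> \<bar>x - y\<bar> \<le> 1 - x \<Longrightarrow> bd w d x \<le> wd w d x y"
proof -
  assume x: "1-d < x" "x < 1" and y: "\<bar>x - y\<bar> \<le> 1 - x"
  have "bd w d x \<le> w ((1-x)/d) / d^3 * ((d-(1-x))/(d+(1-x)))" using bd_ub_right x by auto
  also have "\<dots> \<le> w ((1-x)/d) / d^3 * 1" using x dpos w_nn[of "(1-x)/d"] by (intro mult_left_mono) auto
  also have "\<dots> \<le> wd w d x y" using y dpos by (simp add: wd_lb)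
  finally show ?thesis .
qed

definition kap where "kap = (2/3) * w (1/2) / d^3"

lemma kap_pos: "0 < kap" unfolding kap_def using w_pos[of "1/2"] dpos by simp

lemma bd_core: "d/2 \<le> x \<Longrightarrow> x \<le> 1 - d/2 \<Longrightarrow> bd w d x \<le> w (1/2) / d^3 / 3"
proof -
  assume x: "d/2 \<le> x" "x \<le> 1 - d/2"
  consider "x < d" | "1 - d < x" | "d \<le> x \<and> x \<le> 1 - d" by linarith
  then show ?thesis
  proof cases
    case 1
    have "bd w d x \<le> w (x/d) / d^3 * ((d-x)/(d+x))" using bd_ub_left x 1 dpos by auto
    also have "\<dots> \<le> w (1/2) / d^3 * (1/3)"
      using x 1 dpos w_nn[of "x/d"] w_mono[of "1/2" "x/d"]
      by (intro mult_mono divide_right_mono) (auto simp: field_simps)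
    finally show ?thesis by simp
  next
    case 2
    have "bd w d x \<le> w ((1-x)/d) / d^3 * ((d-(1-x))/(d+(1-x)))" using bd_ub_right x 2 dpos by auto
    also have "\<dots> \<le> w (1/2) / d^3 * (1/3)"
      using x 2 dpos w_nn[of "(1-x)/d"] w_mono[of "1/2" "(1-x)/d"]
      by (intro mult_mono divide_right_mono) (auto simp: field_simps)
    finally show ?thesis by simp
  next
    case 3 then show ?thesis using bd_mid w_nn[of "1/2"] dpos by simp
  qed
qed

lemma wtd_core: "d/2 \<le> x \<Longrightarrow> x \<le> 1 - d/2 \<Longrightarrow> \<bar>y - x\<bar> \<le> d/2 \<Longrightarrow> kap \<le> wtd w d x y"
proof -
  assume x: "d/2 \<le> x" "x \<le> 1 - d/2" and y: "\<bar>y - x\<bar> \<le> d/2"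
  have "w (1/2) / d^3 \<le> wd w d x y" using y by (intro wd_lb) (auto simp: abs_minus_commute)
  moreover have "bd w d x \<le> w (1/2) / d^3 / 3" using bd_core x by auto
  moreover have "0 \<le> bd w d x" using bd_nn .
  moreover have "0 \<le> (indicator {0<..<d} \<bar>y - x\<bar>::real)" "indicator {0<..<d} \<bar>y - x\<bar> \<le> (1::real)"
    by (auto simp: indicator_def)
  moreover have "kap = w (1/2) / d^3 - w (1/2) / d^3 / 3" by (simp add: kap_def field_simps)
  moreover have "bd w d x * indicator {0<..<d} \<bar>y - x\<bar> \<le> bd w d x"
    using bd_nn[of x] by (intro mult_left_le) (auto simp: indicator_def)
  ultimately have "kap \<le> wd w d x y - bd w d x * indicator {0<..<d} \<bar>y - x\<bar>"
    by (intro lin3[of "w (1/2) / d^3" _ "bd w d x"]) auto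
  then show ?thesis unfolding wtd_def by linarith
qed

lemma wtd_nn: "0 \<le> wtd w d x y" unfolding wtd_def by simp

lemma wtd_le: "wtd w d x y \<le> 2 * C0"
proof -
  have "0 \<le> (indicator {0<..<d} \<bar>y - x\<bar>::real)" "indicator {0<..<d} \<bar>y - x\<bar> \<le> (1::real)"
    by (auto simp: indicator_def)
  then have "0 \<le> bd w d x * indicator {0<..<d} \<bar>y - x\<bar>" "bd w d x * indicator {0<..<d} \<bar>y - x\<bar> \<le> C0"
    using bd_nn[of x] bd_le[of x] mult_left_le[of "indicator {0<..<d} \<bar>y - x\<bar>" "bd w d x"] by auto
  then show ?thesis unfolding wtd_def using wd_nn[of x y] wd_le[of x y] unfolding C0_def by linarith
qed

lemma wtd_zero: "d \<le> \<bar>y - x\<bar> \<Longrightarrow> wtd w d x y = 0"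
  unfolding wtd_def using wd_zero[of x y] by (auto simp: abs_minus_commute)

lemma wtd_intg: "set_integrable lebesgue A (\<lambda>y. wtd w d x y)" if "A \<in> sets lebesgue" "emeasure lebesgue A < \<infinity>"
proof (rule bdd_set_integrable[where C="2*C0"])
  show "wtd w d x \<in> borel_measurable lebesgue" using to_leb[OF wtd_meas] .
qed (use that wtd_nn wtd_le in auto)

definition al where "al = (d/2) * w (1/2) / d^3"

lemma al_pos: "0 < al" unfolding al_def using w_pos[of "1/2"] dpos by simp

lemma ad_le: "ad w d x \<le> C0"
proof -
  have i1: "set_integrable lebesgue {0<..<1} (\<lambda>y. wd w d x y)" by (rule wd_intg) auto
  have i2: "set_integrable lebesgue {0<..<1} (\<lambda>y::real. C0)" by (rule const_intg)
  have "ad w d x \<le> (LINT y::real:{0<..<1}|lebesgue. C0)"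
    unfolding ad_def by (rule set_integral_mono[OF i1 i2]) (auto simp: wd_le C0_def)
  also have "\<dots> = C0" by (simp add: set_integral_const)
  finally show ?thesis .
qed

lemma ad_lb: "0 < x \<Longrightarrow> x < 1 \<Longrightarrow> al \<le> ad w d x"
proof -
  assume x: "0 < x" "x < 1"
  define I where "I = (if x \<le> 1/2 then {x..x+d/2} else {x-d/2..x})"
  have sub: "I \<subseteq> {0<..<1}" using x dpos dlt by (auto simp: I_def)
  have mI: "measure lebesgue I = d/2" "I \<in> sets lebesgue" "emeasure lebesgue I < \<infinity>"
    using dpos by (auto simp: I_def)
  have "(LINT y:{0<..<1}|lebesgue. indicator I y * (w (1/2) / d^3)) \<le> ad w d x"
    unfolding ad_def
  proof (rule set_integral_mono[OF set_int_ind_const(2)[OF sub mI(2,3)]])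
    show "set_integrable lebesgue {0<..<1} (\<lambda>y. wd w d x y)" by (rule wd_intg) auto
  next
    fix y :: real assume y: "y \<in> {0<..<1}"
    show "indicator I y * (w (1/2) / d^3) \<le> wd w d x y"
    proof (cases "y \<in> I")
      case True
      then have "\<bar>x - y\<bar> \<le> (1/2) * d" by (auto simp: I_def split: if_splits)
      then show ?thesis using True wd_lb by auto
    qed (auto simp: wd_nn)
  qed
  moreover have "(LINT y:{0<..<1}|lebesgue. indicator I y * (w (1/2) / d^3)) = al"
  proof -
    have "(LINT y:{0<..<1}|lebesgue. indicator I y * (w (1/2) / d^3)) = measure lebesgue I * (w (1/2) / d^3)"
      by (rule set_int_ind_const(1)[OF sub mI(2,3)])
    also have "\<dots> = al" unfolding mI(1) al_def by simp
    finally show ?thesis .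
  qed
  ultimately show ?thesis by simp
qed

end

lemma AE_neq: "AE y in lebesgue. y \<noteq> (c::real)"
  by (rule AE_completion[OF AE_lborel_singleton])

lemma AE_pw: "(\<And>y. y \<in> A \<Longrightarrow> y \<noteq> (c::real) \<Longrightarrow> P y) \<Longrightarrow> AE y in lebesgue. y \<in> A \<longrightarrow> P y"
  by (rule AE_mp[OF AE_neq[of c]]) (auto intro!: AE_I2)

lemma ind_int:
  fixes c a b :: real
  assumes "0 \<le> a" "a \<le> b" "b \<le> 1"
  shows "(LINT y:{0<..<1}|lebesgue. indicator {a<..<b} y * c) = (b - a) * c"
    and "(LINT y:{0<..<1}|lebesgue. indicator {a<..b} y * c) = (b - a) * c"
    and "set_integrable lebesgue {0<..<1} (\<lambda>y. indicator {a<..<b} y * c)"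
    and "set_integrable lebesgue {0<..<1} (\<lambda>y. indicator {a<..b} y * c)"
proof -
  have s1: "{a<..<b} \<subseteq> {0<..<1}" and s2: "b < 1 \<Longrightarrow> {a<..b} \<subseteq> {0<..<1}" using assms by auto
  have "(LINT y:{0<..<1}|lebesgue. indicator {a<..<b} y * c) = measure lebesgue {a<..<b} * c"
    by (rule set_int_ind_const(1)[OF s1]) (use assms in auto)
  then show "(LINT y:{0<..<1}|lebesgue. indicator {a<..<b} y * c) = (b - a) * c"
    using assms by simp
  show "set_integrable lebesgue {0<..<1} (\<lambda>y. indicator {a<..<b} y * c)"
    by (rule set_int_ind_const(2)[OF s1]) (use assms in auto)
  have "(LINT y:{0<..<1}|lebesgue. indicator {a<..b} y * c) = (b - a) * c \<and>
        set_integrable lebesgue {0<..<1} (\<lambda>y. indicator {a<..b} y * c)"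
  proof (cases "b < 1")
    case True
    have "(LINT y:{0<..<1}|lebesgue. indicator {a<..b} y * c) = measure lebesgue {a<..b} * c"
      by (rule set_int_ind_const(1)[OF s2[OF True]]) (use assms in auto)
    moreover have "set_integrable lebesgue {0<..<1} (\<lambda>y. indicator {a<..b} y * c)"
      by (rule set_int_ind_const(2)[OF s2[OF True]]) (use assms in auto)
    ultimately show ?thesis using assms by simp
  next
    case False
    then have b1: "b = 1" using assms by simp
    have pw: "\<And>y. y \<in> {0<..<1} \<Longrightarrow> indicator {a<..b} y * c = indicator {a<..<b} y * c"
      using b1 by (auto simp: indicator_def)
    have "(LINT y:{0<..<1}|lebesgue. indicator {a<..b} y * c) = (LINT y:{0<..<1}|lebesgue. indicator {a<..<b} y * c)"
      using pw by (intro set_lebesgue_integral_cong) auto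
    moreover have "set_integrable lebesgue {0<..<1} (\<lambda>y. indicator {a<..b} y * c) = set_integrable lebesgue {0<..<1} (\<lambda>y. indicator {a<..<b} y * c)"
      using pw by (intro set_integrable_cong) auto
    ultimately show ?thesis
      using \<open>(LINT y:{0<..<1}|lebesgue. indicator {a<..<b} y * c) = (b - a) * c\<close>
        \<open>set_integrable lebesgue {0<..<1} (\<lambda>y. indicator {a<..<b} y * c)\<close> by metis
  qed
  then show "(LINT y:{0<..<1}|lebesgue. indicator {a<..b} y * c) = (b - a) * c"
    and "set_integrable lebesgue {0<..<1} (\<lambda>y. indicator {a<..b} y * c)" by auto
qed

lemma kint: fixes g :: "real \<Rightarrow> real" and C :: real shows "g \<in> borel_measurable borel \<Longrightarrow> (\<And>y. \<bar>g y\<bar> \<le> C) \<Longrightarrow> set_integrable lebesgue {0<..<1::real} g"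
  by (rule bdd_set_integrable[where C=C]) (auto intro: to_leb)

context S begin

definition sfun where "sfun x = ad w d x - (LINT y:{0<..<1}|lebesgue. wtd w d x y)"

lemma wd_i: "set_integrable lebesgue {0<..<1} (\<lambda>y. wd w d x y)" by (rule wd_intg) auto
lemma wtd_i: "set_integrable lebesgue {0<..<1} (\<lambda>y. wtd w d x y)" by (rule wtd_intg) auto

lemma sfun_eq: "sfun x = (LINT y:{0<..<1}|lebesgue. wd w d x y - wtd w d x y)"
  unfolding sfun_def ad_def using set_integral_diff(2)[OF wd_i wtd_i] by simp

lemma sfun_i: "set_integrable lebesgue {0<..<1} (\<lambda>y. wd w d x y - wtd w d x y)"
  using set_integral_diff(1)[OF wd_i wtd_i] .

lemma wtd_ind_i: "set_integrable lebesgue {0<..<1} (\<lambda>y. indicator T y * wtd w d x y)" if "T \<in> sets borel"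
  by (rule kint[where C="2*C0"]) (use that wtd_meas[of x] wtd_le wtd_nn C0_pos in \<open>auto simp: abs_mult indicator_def\<close>)

lemma s_J0:
  assumes x: "d/2 \<le> x" "x \<le> 3*d/4"
  shows "bl * d / 2 \<le> sfun x"
proof -
  let ?B = "bd w d x"
  let ?g = "\<lambda>y. indicator {0<..2*x} y * ?B - indicator {2*x<..<x+d} y * ?B"
  have i1: "set_integrable lebesgue {0<..<1} (\<lambda>y. indicator {0<..2*x} y * ?B)"
    using x dpos dlt by (intro ind_int) auto
  have i2: "set_integrable lebesgue {0<..<1} (\<lambda>y. indicator {2*x<..<x+d} y * ?B)"
    using x dpos dlt by (intro ind_int) auto
  have v1: "(LINT y:{0<..<1}|lebesgue. indicator {0<..2*x} y * ?B) = (2*x - 0) * ?B"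
    using x dpos dlt by (intro ind_int) auto
  have v2: "(LINT y:{0<..<1}|lebesgue. indicator {2*x<..<x+d} y * ?B) = (x + d - 2*x) * ?B"
    using x dpos dlt by (intro ind_int) auto
  have pw: "?g y \<le> wd w d x y - wtd w d x y" if y: "y \<in> {0<..<1}" "y \<noteq> x" for y
  proof -
    have ub: "wtd w d x y \<le> wd w d x y + ?B"
      unfolding wtd_def using wd_nn[of x y] bd_nn[of x] by (auto simp: indicator_def)
    consider "y \<le> 2*x" | "2*x < y \<and> y < x + d" | "x + d \<le> y" by linarith
    then show ?thesis
    proof cases
      case 1
      have ax: "\<bar>x - y\<bar> \<le> x" using 1 y by auto
      have ge: "?B \<le> wd w d x y" using wd_ge_bd_left[OF _ _ ax] x dpos by auto
      have "indicator {0<..<d} \<bar>y - x\<bar> = (1::real)" using y ax x by (auto simp: indicator_def)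
      then have "wtd w d x y = wd w d x y - ?B" unfolding wtd_def using ge by simp
      then show ?thesis using 1 y by (auto simp: indicator_def)
    next
      case 2 then show ?thesis using ub by (auto simp: indicator_def)
    next
      case 3
      then have "d \<le> \<bar>y - x\<bar>" by auto
      then have "wtd w d x y = 0" "wd w d x y = 0" using wtd_zero wd_zero[of x y] by (auto simp: abs_minus_commute)
      then show ?thesis using 3 x dpos by (auto simp: indicator_def)
    qed
  qed
  have "(LINT y:{0<..<1}|lebesgue. ?g y) \<le> sfun x"
    unfolding sfun_eq
    by (rule set_integral_mono_AE[OF set_integral_diff(1)[OF i1 i2] sfun_i]) (rule AE_pw, rule pw)
  moreover have "(LINT y:{0<..<1}|lebesgue. ?g y) = (2*x) * ?B - (d - x) * ?B"
    unfolding set_integral_diff(2)[OF i1 i2] v1 v2 by (simp add: algebra_simps)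
  moreover have "bl * d / 2 \<le> (2*x) * ?B - (d - x) * ?B"
  proof -
    have "bl \<le> ?B" using bd_lb_left x dpos by auto
    then have "bl * (d/2) \<le> ?B * (3*x - d)" using x bl_pos by (intro mult_mono) auto
    then show ?thesis by (simp add: algebra_simps)
  qed
  ultimately show ?thesis by linarith
qed

end

lemma arithG: "(E::real) \<ge> NR \<Longrightarrow> s \<ge> T - 2*(NL+NR) \<Longrightarrow> NL \<le> NR \<Longrightarrow> s \<ge> 0 \<Longrightarrow> E + s \<ge> T/4"
  by argo

lemma absmax: "(W::real) - \<bar>W - B\<bar> = B - 2 * max 0 (B - W)"
  by (auto simp: max_def abs_if)

context S begin

definition Gl where "Gl x = (LINT y:{0<..<1}|lebesgue. indicator {d/2<..<1} y * wtd w d x y) + sfun x"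

lemma G_left:
  assumes x: "0 < x" "x < d/2" and s0: "0 \<le> sfun x"
  shows "d * bl / 4 \<le> Gl x"
proof -
  let ?B = "bd w d x"
  define p where "p = (\<lambda>y. indicator {0<..<x+d} y * max 0 (?B - wd w d x y))"
  define dd where "dd = max 0 (?B - wd w d x (d/2))"
  have dd0: "0 \<le> dd" unfolding dd_def by simp
  have p0: "0 \<le> p y" for y unfolding p_def by (simp add: indicator_def)
  have pmeas: "p \<in> borel_measurable borel" unfolding p_def using wd_meas[of x] by measurable
  have pbd: "\<bar>p y\<bar> \<le> C0" for y
  proof -
    have "max 0 (?B - wd w d x y) \<le> C0" using bd_le[of x] wd_nn[of x y] C0_pos by auto
    then show ?thesis unfolding p_def by (auto simp: indicator_def)
  qed
  have ip: "set_integrable lebesgue {0<..<1} p" by (rule kint[OF pmeas pbd])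
  have ipL: "set_integrable lebesgue {0<..<1} (\<lambda>y. indicator {0<..d/2} y * p y)"
    by (rule kint[where C=C0]) (use pmeas pbd C0_pos in \<open>auto simp: indicator_def abs_mult\<close>)
  have ipR: "set_integrable lebesgue {0<..<1} (\<lambda>y. indicator {d/2<..<1} y * p y)"
    by (rule kint[where C=C0]) (use pmeas pbd C0_pos in \<open>auto simp: indicator_def abs_mult\<close>)
  define NL where "NL = (LINT y:{0<..<1}|lebesgue. indicator {0<..d/2} y * p y)"
  define NR where "NR = (LINT y:{0<..<1}|lebesgue. indicator {d/2<..<1} y * p y)"
  have split: "(LINT y:{0<..<1}|lebesgue. p y) = NL + NR"
  proof -
    have "(LINT y:{0<..<1}|lebesgue. p y) = (LINT y:{0<..<1}|lebesgue. indicator {0<..d/2} y * p y + indicator {d/2<..<1} y * p y)"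
      by (intro set_lebesgue_integral_cong) (auto simp: indicator_def)
    also have "\<dots> = NL + NR" unfolding NL_def NR_def by (rule set_integral_add(2)[OF ipL ipR])
    finally show ?thesis .
  qed
  have ia: "set_integrable lebesgue {0<..<1} (\<lambda>y. indicator {0<..<x+d} y * ?B)"
    using x dpos dlt by (intro ind_int) auto
  have ia2: "set_integrable lebesgue {0<..<1} (\<lambda>y. 2 * p y)" using ip by auto
  have sa: "(x+d) * ?B - 2 * (NL + NR) \<le> sfun x"
  proof -
    have "(LINT y:{0<..<1}|lebesgue. indicator {0<..<x+d} y * ?B - 2 * p y) \<le> sfun x"
      unfolding sfun_eq
    proof (rule set_integral_mono_AE[OF set_integral_diff(1)[OF ia ia2] sfun_i], rule AE_pw)
      fix y :: real assume y: "y \<in> {0<..<1}" "y \<noteq> x"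
      show "indicator {0<..<x+d} y * ?B - 2 * p y \<le> wd w d x y - wtd w d x y"
      proof (cases "y < x + d")
        case True
        have "indicator {0<..<d} \<bar>y - x\<bar> = (1::real)" using True y x by (auto simp: indicator_def)
        then have "wtd w d x y = \<bar>wd w d x y - ?B\<bar>" unfolding wtd_def by simp
        then show ?thesis using True y absmax[of "wd w d x y" ?B] by (simp add: p_def indicator_def)
      next
        case False
        then have "d \<le> \<bar>y - x\<bar>" by auto
        then have "wtd w d x y = 0" "wd w d x y = 0" using wtd_zero wd_zero[of x y] by (auto simp: abs_minus_commute)
        then show ?thesis using False by (simp add: p_def indicator_def)
      qed
    qed
    moreover have "(LINT y:{0<..<1}|lebesgue. indicator {0<..<x+d} y * ?B - 2 * p y) = (x+d) * ?B - 2 * (NL + NR)"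
    proof -
      have v: "(LINT y:{0<..<1}|lebesgue. indicator {0<..<x+d} y * ?B) = (x + d - 0) * ?B"
        using x dpos dlt by (intro ind_int) auto
      have v2: "(LINT y:{0<..<1}|lebesgue. 2 * p y) = 2 * (NL + NR)"
        using split by (simp only: set_integral_mult_right)
      show ?thesis unfolding set_integral_diff(2)[OF ia ia2] v v2 by simp
    qed
    ultimately show ?thesis by simp
  qed
  have sc: "NL \<le> (d/2) * dd"
  proof -
    have i: "set_integrable lebesgue {0<..<1} (\<lambda>y. indicator {0<..d/2} y * dd)"
      using dpos dlt by (intro ind_int) auto
    have v: "(LINT y:{0<..<1}|lebesgue. indicator {0<..d/2} y * dd) = (d/2 - 0) * dd"
      using dpos dlt by (intro ind_int) auto
    have "NL \<le> (LINT y:{0<..<1}|lebesgue. indicator {0<..d/2} y * dd)"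
      unfolding NL_def
    proof (rule set_integral_mono[OF ipL i])
      fix y :: real assume y: "y \<in> {0<..<1}"
      show "indicator {0<..d/2} y * p y \<le> indicator {0<..d/2} y * dd"
      proof (cases "y \<le> d/2")
        case True
        have "p y \<le> dd"
        proof (cases "\<bar>x - y\<bar> \<le> x")
          case True
          then have "?B \<le> wd w d x y" using wd_ge_bd_left x by auto
          then show ?thesis using dd0 by (simp add: p_def indicator_def)
        next
          case False
          then have "y > x" "y - x \<le> d/2 - x" using y \<open>y \<le> d/2\<close> x by auto
          then have "\<bar>x - y\<bar> \<le> \<bar>x - d/2\<bar>" using x by auto
          then have "wd w d x (d/2) \<le> wd w d x y" by (rule wd_mono)
          then have "max 0 (?B - wd w d x y) \<le> dd" unfolding dd_def by auto
          then show ?thesis unfolding p_def by (auto simp: indicator_def)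
        qed
        then show ?thesis using True y by (auto simp: indicator_def)
      qed (auto simp: indicator_def)
    qed
    also note v
    finally show ?thesis by simp
  qed
  have sd: "(d/2) * dd \<le> NR"
  proof -
    have i: "set_integrable lebesgue {0<..<1} (\<lambda>y. indicator {d/2<..<x+d} y * dd)"
      using x dpos dlt by (intro ind_int) auto
    have v: "(LINT y:{0<..<1}|lebesgue. indicator {d/2<..<x+d} y * dd) = (x + d - d/2) * dd"
      using x dpos dlt by (intro ind_int) auto
    have "(LINT y:{0<..<1}|lebesgue. indicator {d/2<..<x+d} y * dd) \<le> NR"
      unfolding NR_def
    proof (rule set_integral_mono[OF i ipR])
      fix y :: real assume y: "y \<in> {0<..<1}"
      show "indicator {d/2<..<x+d} y * dd \<le> indicator {d/2<..<1} y * p y"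
      proof (cases "d/2 < y \<and> y < x + d")
        case True
        then have "\<bar>x - d/2\<bar> \<le> \<bar>x - y\<bar>" using x by auto
        then have "wd w d x y \<le> wd w d x (d/2)" by (rule wd_mono)
        then have "dd \<le> max 0 (?B - wd w d x y)" unfolding dd_def by auto
        then show ?thesis using True y x by (auto simp: indicator_def p_def)
      qed (use p0 in \<open>auto simp: indicator_def\<close>)
    qed
    moreover have "(d/2) * dd \<le> (x + d - d/2) * dd" using x dd0 by (intro mult_right_mono) auto
    ultimately show ?thesis using v by linarith
  qed
  have se: "NR \<le> (LINT y:{0<..<1}|lebesgue. indicator {d/2<..<1} y * wtd w d x y)"
    unfolding NR_def
  proof (rule set_integral_mono_AE[OF ipR wtd_ind_i], simp, rule AE_pw)
    fix y :: real assume y: "y \<in> {0<..<1}" "y \<noteq> x"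
    have "p y \<le> wtd w d x y"
    proof (cases "y < x + d")
      case True
      have "indicator {0<..<d} \<bar>y - x\<bar> = (1::real)" using True y x by (auto simp: indicator_def)
      then have "wtd w d x y = \<bar>wd w d x y - ?B\<bar>" unfolding wtd_def by simp
      then show ?thesis by (auto simp: p_def indicator_def)
    next
      case False then show ?thesis using wtd_nn by (simp add: p_def indicator_def)
    qed
    then show "indicator {d/2<..<1} y * p y \<le> indicator {d/2<..<1} y * wtd w d x y"
      by (auto simp: indicator_def)
  qed
  have "NL \<le> NR" using sc sd by linarith
  have main: "(x+d) * ?B / 4 \<le> Gl x"
    unfolding Gl_def using arithG[OF se sa \<open>NL \<le> NR\<close> s0] .
  have "d * bl \<le> (x+d) * ?B" using bd_lb_left[of x] x dpos bl_pos by (intro mult_mono) auto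
  then show ?thesis using main by linarith
qed

definition Gr where "Gr x = (LINT y:{0<..<1}|lebesgue. indicator {0<..1-d/2} y * wtd w d x y) + sfun x"

lemma G_right:
  assumes x: "1 - d/2 < x" "x < 1" and s0: "0 \<le> sfun x"
  shows "d * bl / 4 \<le> Gr x"
proof -
  let ?B = "bd w d x"
  define p where "p = (\<lambda>y. indicator {x-d<..<1} y * max 0 (?B - wd w d x y))"
  define dd where "dd = max 0 (?B - wd w d x (1-d/2))"
  have dd0: "0 \<le> dd" unfolding dd_def by simp
  have p0: "0 \<le> p y" for y unfolding p_def by (simp add: indicator_def)
  have pmeas: "p \<in> borel_measurable borel" unfolding p_def using wd_meas[of x] by measurable
  have pbd: "\<bar>p y\<bar> \<le> C0" for y
  proof -
    have "max 0 (?B - wd w d x y) \<le> C0" using bd_le[of x] wd_nn[of x y] C0_pos by auto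
    then show ?thesis unfolding p_def by (auto simp: indicator_def)
  qed
  have ip: "set_integrable lebesgue {0<..<1} p" by (rule kint[OF pmeas pbd])
  have ipL: "set_integrable lebesgue {0<..<1} (\<lambda>y. indicator {1-d/2<..<1} y * p y)"
    by (rule kint[where C=C0]) (use pmeas pbd C0_pos in \<open>auto simp: indicator_def abs_mult\<close>)
  have ipR: "set_integrable lebesgue {0<..<1} (\<lambda>y. indicator {0<..1-d/2} y * p y)"
    by (rule kint[where C=C0]) (use pmeas pbd C0_pos in \<open>auto simp: indicator_def abs_mult\<close>)
  define NL where "NL = (LINT y:{0<..<1}|lebesgue. indicator {1-d/2<..<1} y * p y)"
  define NR where "NR = (LINT y:{0<..<1}|lebesgue. indicator {0<..1-d/2} y * p y)"
  have split: "(LINT y:{0<..<1}|lebesgue. p y) = NL + NR"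
  proof -
    have "(LINT y:{0<..<1}|lebesgue. p y) = (LINT y:{0<..<1}|lebesgue. indicator {1-d/2<..<1} y * p y + indicator {0<..1-d/2} y * p y)"
      by (intro set_lebesgue_integral_cong) (auto simp: indicator_def)
    also have "\<dots> = NL + NR" unfolding NL_def NR_def by (rule set_integral_add(2)[OF ipL ipR])
    finally show ?thesis .
  qed
  have ia: "set_integrable lebesgue {0<..<1} (\<lambda>y. indicator {x-d<..<1} y * ?B)"
    using x dpos dlt by (intro ind_int) auto
  have ia2: "set_integrable lebesgue {0<..<1} (\<lambda>y. 2 * p y)" using ip by auto
  have sa: "(1-x+d) * ?B - 2 * (NL + NR) \<le> sfun x"
  proof -
    have "(LINT y:{0<..<1}|lebesgue. indicator {x-d<..<1} y * ?B - 2 * p y) \<le> sfun x"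
      unfolding sfun_eq
    proof (rule set_integral_mono_AE[OF set_integral_diff(1)[OF ia ia2] sfun_i], rule AE_pw)
      fix y :: real assume y: "y \<in> {0<..<1}" "y \<noteq> x"
      show "indicator {x-d<..<1} y * ?B - 2 * p y \<le> wd w d x y - wtd w d x y"
      proof (cases "x - d < y")
        case True
        have "indicator {0<..<d} \<bar>y - x\<bar> = (1::real)" using True y x by (auto simp: indicator_def)
        then have "wtd w d x y = \<bar>wd w d x y - ?B\<bar>" unfolding wtd_def by simp
        then show ?thesis using True y absmax[of "wd w d x y" ?B] by (simp add: p_def indicator_def)
      next
        case False
        then have "d \<le> \<bar>y - x\<bar>" by auto
        then have "wtd w d x y = 0" "wd w d x y = 0" using wtd_zero wd_zero[of x y] by (auto simp: abs_minus_commute)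
        then show ?thesis using False by (simp add: p_def indicator_def)
      qed
    qed
    moreover have "(LINT y:{0<..<1}|lebesgue. indicator {x-d<..<1} y * ?B - 2 * p y) = (1-x+d) * ?B - 2 * (NL + NR)"
    proof -
      have v: "(LINT y:{0<..<1}|lebesgue. indicator {x-d<..<1} y * ?B) = (1 - (x - d)) * ?B"
        using x dpos dlt by (intro ind_int) auto
      have v2: "(LINT y:{0<..<1}|lebesgue. 2 * p y) = 2 * (NL + NR)"
        using split by (simp only: set_integral_mult_right)
      show ?thesis unfolding set_integral_diff(2)[OF ia ia2] v v2 by (simp add: algebra_simps)
    qed
    ultimately show ?thesis by simp
  qed
  have sc: "NL \<le> (d/2) * dd"
  proof -
    have i: "set_integrable lebesgue {0<..<1} (\<lambda>y. indicator {1-d/2<..<1} y * dd)"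
      using dpos dlt by (intro ind_int) auto
    have v: "(LINT y:{0<..<1}|lebesgue. indicator {1-d/2<..<1} y * dd) = (1 - (1-d/2)) * dd"
      using dpos dlt by (intro ind_int) auto
    have "NL \<le> (LINT y:{0<..<1}|lebesgue. indicator {1-d/2<..<1} y * dd)"
      unfolding NL_def
    proof (rule set_integral_mono[OF ipL i])
      fix y :: real assume y: "y \<in> {0<..<1}"
      show "indicator {1-d/2<..<1} y * p y \<le> indicator {1-d/2<..<1} y * dd"
      proof (cases "1-d/2 < y")
        case True
        have "p y \<le> dd"
        proof (cases "\<bar>x - y\<bar> \<le> 1 - x")
          case True
          then have "?B \<le> wd w d x y" using wd_ge_bd_right x dpos by auto
          then show ?thesis using dd0 by (simp add: p_def indicator_def)
        next
          case False
          then have "y < x" "x - y \<le> x - (1-d/2)" using y \<open>1-d/2 < y\<close> x by auto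
          then have "\<bar>x - y\<bar> \<le> \<bar>x - (1-d/2)\<bar>" using x by auto
          then have "wd w d x (1-d/2) \<le> wd w d x y" by (rule wd_mono)
          then have "max 0 (?B - wd w d x y) \<le> dd" unfolding dd_def by auto
          then show ?thesis unfolding p_def by (auto simp: indicator_def)
        qed
        then show ?thesis using True y by (auto simp: indicator_def)
      qed (auto simp: indicator_def)
    qed
    also note v
    finally show ?thesis by simp
  qed
  have sd: "(d/2) * dd \<le> NR"
  proof -
    have i: "set_integrable lebesgue {0<..<1} (\<lambda>y. indicator {x-d<..1-d/2} y * dd)"
      using x dpos dlt by (intro ind_int) auto
    have v: "(LINT y:{0<..<1}|lebesgue. indicator {x-d<..1-d/2} y * dd) = (1-d/2 - (x - d)) * dd"
      using x dpos dlt by (intro ind_int) auto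
    have "(LINT y:{0<..<1}|lebesgue. indicator {x-d<..1-d/2} y * dd) \<le> NR"
      unfolding NR_def
    proof (rule set_integral_mono[OF i ipR])
      fix y :: real assume y: "y \<in> {0<..<1}"
      show "indicator {x-d<..1-d/2} y * dd \<le> indicator {0<..1-d/2} y * p y"
      proof (cases "x - d < y \<and> y \<le> 1 - d/2")
        case True
        then have "\<bar>x - (1-d/2)\<bar> \<le> \<bar>x - y\<bar>" using x by auto
        then have "wd w d x y \<le> wd w d x (1-d/2)" by (rule wd_mono)
        then have "dd \<le> max 0 (?B - wd w d x y)" unfolding dd_def by auto
        then show ?thesis using True y x by (auto simp: indicator_def p_def)
      qed (use p0 in \<open>auto simp: indicator_def\<close>)
    qed
    moreover have "(d/2) * dd \<le> (1-d/2 - (x - d)) * dd" using x dd0 by (intro mult_right_mono) auto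
    ultimately show ?thesis using v by linarith
  qed
  have se: "NR \<le> (LINT y:{0<..<1}|lebesgue. indicator {0<..1-d/2} y * wtd w d x y)"
    unfolding NR_def
  proof (rule set_integral_mono_AE[OF ipR wtd_ind_i], simp, rule AE_pw)
    fix y :: real assume y: "y \<in> {0<..<1}" "y \<noteq> x"
    have "p y \<le> wtd w d x y"
    proof (cases "x - d < y")
      case True
      have "indicator {0<..<d} \<bar>y - x\<bar> = (1::real)" using True y x by (auto simp: indicator_def)
      then have "wtd w d x y = \<bar>wd w d x y - ?B\<bar>" unfolding wtd_def by simp
      then show ?thesis by (auto simp: p_def indicator_def)
    next
      case False then show ?thesis using wtd_nn by (simp add: p_def indicator_def)
    qed
    then show "indicator {0<..1-d/2} y * p y \<le> indicator {0<..1-d/2} y * wtd w d x y"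
      by (auto simp: indicator_def)
  qed
  have "NL \<le> NR" using sc sd by linarith
  have main: "(1-x+d) * ?B / 4 \<le> Gr x"
    unfolding Gr_def using arithG[OF se sa \<open>NL \<le> NR\<close> s0] .
  have "d * bl \<le> (1-x+d) * ?B" using bd_lb_right[of x] x dpos bl_pos by (intro mult_mono) auto
  then show ?thesis using main by linarith
qed

end

lemma Om_notnull:
  fixes a b :: real assumes "a < b"
  shows "\<not> (AE x in lebesgue. x \<notin> {a<..<b})"
proof
  assume "AE x in lebesgue. x \<notin> {a<..<b}"
  then have "emeasure lebesgue {a<..<b} = 0"
    by (subst (asm) AE_iff_measurable[where N="{a<..<b}"]) auto
  then show False using assms by simp
qed

lemma ess_sup:
  fixes f :: "real \<Rightarrow> real" and a b L Bd :: real
  assumes ab: "a < b" and lo: "AE x in lebesgue. x \<in> {a<..<b} \<longrightarrow> L \<le> f x"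
    and hi: "AE x in lebesgue. x \<in> {a<..<b} \<longrightarrow> f x \<le> Bd"
  shows "\<exists>M. (AE x in lebesgue. x \<in> {a<..<b} \<longrightarrow> f x \<le> M) \<and>
             (\<forall>t. (AE x in lebesgue. x \<in> {a<..<b} \<longrightarrow> f x \<le> t) \<longrightarrow> M \<le> t)"
proof -
  define T where "T = {t. AE x in lebesgue. x \<in> {a<..<b} \<longrightarrow> f x \<le> t}"
  have lowT: "L \<le> t" if "t \<in> T" for t
  proof (rule ccontr)
    assume nt: "\<not> L \<le> t"
    have tt: "AE x in lebesgue. x \<in> {a<..<b} \<longrightarrow> f x \<le> t" using that unfolding T_def by simp
    from tt lo have "AE x in lebesgue. x \<notin> {a<..<b}"
      by eventually_elim (use nt in auto)
    with Om_notnull[OF ab] show False by simp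
  qed
  have ne: "Bd \<in> T" using hi unfolding T_def by simp
  have bdd: "bdd_below T" using lowT by (auto simp: bdd_below_def)
  define M where "M = Inf T"
  have all: "\<forall>n::nat. AE x in lebesgue. x \<in> {a<..<b} \<longrightarrow> f x \<le> M + 1/Suc n"
  proof
    fix n :: nat
    have "\<exists>t\<in>T. t < M + 1/Suc n" unfolding M_def using ne by (intro cInf_lessD) auto
    then obtain t where t: "t \<in> T" "t < M + 1/Suc n" by blast
    have tt: "AE x in lebesgue. x \<in> {a<..<b} \<longrightarrow> f x \<le> t" using t(1) unfolding T_def by simp
    from tt show "AE x in lebesgue. x \<in> {a<..<b} \<longrightarrow> f x \<le> M + 1/Suc n"
      by eventually_elim (use t(2) in auto)
  qed
  then have "AE x in lebesgue. \<forall>n::nat. x \<in> {a<..<b} \<longrightarrow> f x \<le> M + 1/Suc n"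
    by (rule AE_all_countable[THEN iffD2])
  then have "AE x in lebesgue. x \<in> {a<..<b} \<longrightarrow> f x \<le> M"
  proof eventually_elim
    case (elim x)
    show ?case
    proof
      assume xA: "x \<in> {a<..<b}"
      show "f x \<le> M"
      proof (rule ccontr)
        assume "\<not> f x \<le> M"
        then have "0 < f x - M" by simp
        then obtain n :: nat where n: "n > 0" "inverse (real n) < f x - M"
          using ex_inverse_of_nat_less by blast
        then obtain m where m: "n = Suc m" by (cases n) auto
        have "f x \<le> M + 1/Suc m" using elim xA by blast
        then show False using n m by (simp add: field_simps)
      qed
    qed
  qed
  moreover have "\<forall>t. (AE x in lebesgue. x \<in> {a<..<b} \<longrightarrow> f x \<le> t) \<longrightarrow> M \<le> t"
    unfolding M_def using bdd by (auto intro: cInf_lower simp: T_def)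
  ultimately show ?thesis by blast
qed

lemma int_mult_bdd:
  fixes f g :: "real \<Rightarrow> real"
  assumes fi: "set_integrable lebesgue A f" and gm: "g \<in> borel_measurable lebesgue"
    and gb: "\<And>y. \<bar>g y\<bar> \<le> C"
  shows "set_integrable lebesgue A (\<lambda>y. f y * g y)"
proof (rule set_integrable_bound[where f="\<lambda>y. C * f y"])
  show "set_integrable lebesgue A (\<lambda>y. C * f y)" using fi by auto
  have "(\<lambda>y. indicator A y *\<^sub>R f y) \<in> borel_measurable lebesgue"
    using fi unfolding set_integrable_def by (rule borel_measurable_integrable)
  then have "(\<lambda>y. (indicator A y *\<^sub>R f y) * g y) \<in> borel_measurable lebesgue"
    using gm by measurable
  then show "set_borel_measurable lebesgue A (\<lambda>y. f y * g y)"
    unfolding set_borel_measurable_def by (simp add: mult.assoc)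
  have C0: "0 \<le> C" using gb[of 0] by linarith
  have "norm (f y * g y) \<le> norm (C * f y)" for y
  proof -
    have "\<bar>f y\<bar> * \<bar>g y\<bar> \<le> \<bar>f y\<bar> * C" by (rule mult_left_mono) (use gb in auto)
    then show ?thesis using C0 by (simp add: abs_mult mult.commute)
  qed
  then show "AE y in lebesgue. y \<in> A \<longrightarrow> norm (f y * g y) \<le> norm (C * f y)" by simp
qed

lemma divlb: "0 < (a::real) \<Longrightarrow> a \<le> A \<Longrightarrow> 0 \<le> X \<Longrightarrow> X \<le> a * p \<Longrightarrow> X / A \<le> p"
proof -
  assume h: "0 < a" "a \<le> A" "0 \<le> X" "X \<le> a * p"
  have "X / A \<le> X / a" using h by (intro divide_left_mono) auto
  also have "X / a \<le> p" using h by (simp add: pos_divide_le_eq mult.commute)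
  finally show ?thesis .
qed

locale MPc = S +
  fixes phi :: "real \<Rightarrow> real" and M :: real
  assumes pint: "set_integrable lebesgue {0<..<1} phi"
    and pnn: "\<And>y. 0 \<le> phi y"
    and sub: "AE x in lebesgue. x \<in> {0<..<1} \<longrightarrow> ad w d x * phi x \<le> (LINT y:{0<..<1}|lebesgue. phi y * wtd w d x y)"
    and A2s: "\<And>x. x \<in> {0<..<1} \<Longrightarrow> 0 \<le> sfun x"
    and Mup: "AE x in lebesgue. x \<in> {0<..<1} \<longrightarrow> phi x \<le> M"
    and Mmin: "\<And>t. (AE x in lebesgue. x \<in> {0<..<1} \<longrightarrow> phi x \<le> t) \<Longrightarrow> M \<le> t"
    and Mpos: "0 < M"
begin

definition psi where "psi x = M - phi x"

lemma psi_le: "psi x \<le> M" using pnn[of x] by (simp add: psi_def)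

lemma psi_nn: "AE x in lebesgue. x \<in> {0<..<1} \<longrightarrow> 0 \<le> psi x"
  using Mup by eventually_elim (auto simp: psi_def)

lemma phi_k: "set_integrable lebesgue {0<..<1} (\<lambda>y. phi y * g y)"
  if "g \<in> borel_measurable borel" "\<And>y. \<bar>g y\<bar> \<le> C" for g C
  by (rule int_mult_bdd[OF pint to_leb[OF that(1)] that(2)])

lemma psi_k: "set_integrable lebesgue {0<..<1} (\<lambda>y. psi y * g y)"
  if g: "g \<in> borel_measurable borel" "\<And>y. \<bar>g y\<bar> \<le> C" for g C
proof -
  have i1: "set_integrable lebesgue {0<..<1} (\<lambda>y. M * g y)"
    using kint[OF g] by auto
  have "set_integrable lebesgue {0<..<1} (\<lambda>y. M * g y - phi y * g y)"
    by (rule set_integral_diff(1)[OF i1 phi_k[OF g]])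
  moreover have "(\<lambda>y. psi y * g y) = (\<lambda>y. M * g y - phi y * g y)"
    by (auto simp: psi_def algebra_simps fun_eq_iff)
  ultimately show ?thesis by simp
qed

lemma wtd_k: "set_integrable lebesgue {0<..<1} (\<lambda>y. psi y * wtd w d x y)"
  by (rule psi_k[OF wtd_meas, where C="2*C0"]) (use wtd_nn wtd_le in auto)

lemma wtd_kp: "set_integrable lebesgue {0<..<1} (\<lambda>y. phi y * wtd w d x y)"
  by (rule phi_k[OF wtd_meas, where C="2*C0"]) (use wtd_nn wtd_le in auto)

lemma psi_wtd_eq:
  "(LINT y:{0<..<1}|lebesgue. psi y * wtd w d x y) =
     M * (LINT y:{0<..<1}|lebesgue. wtd w d x y) - (LINT y:{0<..<1}|lebesgue. phi y * wtd w d x y)"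
proof -
  have i1: "set_integrable lebesgue {0<..<1} (\<lambda>y. M * wtd w d x y)" using wtd_i by auto
  have "(LINT y:{0<..<1}|lebesgue. psi y * wtd w d x y) =
     (LINT y:{0<..<1}|lebesgue. M * wtd w d x y - phi y * wtd w d x y)"
    by (intro set_lebesgue_integral_cong) (auto simp: psi_def algebra_simps)
  also have "\<dots> = (LINT y:{0<..<1}|lebesgue. M * wtd w d x y) - (LINT y:{0<..<1}|lebesgue. phi y * wtd w d x y)"
    by (rule set_integral_diff(2)[OF i1 wtd_kp])
  finally show ?thesis by simp
qed

lemma key: "AE x in lebesgue. x \<in> {0<..<1} \<longrightarrow>
   (LINT y:{0<..<1}|lebesgue. psi y * wtd w d x y) + M * sfun x \<le> ad w d x * psi x"
  using sub
proof eventually_elim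
  case (elim x)
  show ?case
  proof
    assume x: "x \<in> {0<..<1}"
    have a: "ad w d x * phi x \<le> (LINT y:{0<..<1}|lebesgue. phi y * wtd w d x y)" using elim x by blast
    have b: "M * sfun x = M * ad w d x - M * (LINT y:{0<..<1}|lebesgue. wtd w d x y)"
      by (simp add: sfun_def algebra_simps)
    have c: "ad w d x * psi x = M * ad w d x - ad w d x * phi x" by (simp add: psi_def algebra_simps)
    show "(LINT y:{0<..<1}|lebesgue. psi y * wtd w d x y) + M * sfun x \<le> ad w d x * psi x"
      unfolding psi_wtd_eq using a b c by linarith
  qed
qed

lemma zero_i: "set_integrable lebesgue {0<..<1::real} (\<lambda>y. 0::real)"
  by (simp add: set_integrable_def)

lemma Ipos: "0 \<le> (LINT y:{0<..<1}|lebesgue. psi y * wtd w d x y)"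
  unfolding set_lebesgue_integral_def
proof (rule integral_nonneg_AE)
  show "AE y in lebesgue. 0 \<le> indicator {0<..<1} y *\<^sub>R (psi y * wtd w d x y)"
    using psi_nn by eventually_elim (use wtd_nn in \<open>auto simp: indicator_def\<close>)
qed

lemma ad_pos: "x \<in> {0<..<1} \<Longrightarrow> 0 < ad w d x"
  using ad_lb[of x] al_pos by auto

lemma J0: "AE x in lebesgue. x \<in> {d/2..3*d/4} \<longrightarrow> M * (bl*d/2) / C0 \<le> psi x"
  using key
proof eventually_elim
  case (elim x)
  show ?case
  proof
    assume x: "x \<in> {d/2..3*d/4}"
    then have xO: "x \<in> {0<..<1}" using dpos dlt by auto
    have k: "(LINT y:{0<..<1}|lebesgue. psi y * wtd w d x y) + M * sfun x \<le> ad w d x * psi x"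
      using elim xO by blast
    have s: "bl*d/2 \<le> sfun x" using s_J0 x by auto
    have "M * (bl*d/2) \<le> M * sfun x" using s Mpos by (intro mult_left_mono) auto
    then have "M * (bl*d/2) \<le> ad w d x * psi x" using k Ipos[of x] by linarith
    then show "M * (bl*d/2) / C0 \<le> psi x"
      using ad_pos[OF xO] ad_le[of x] Mpos bl_pos dpos by (intro divlb[where a="ad w d x"]) auto
  qed
qed

lemma propag:
  assumes c: "0 \<le> c" and p: "0 \<le> p" "p + d/4 \<le> 1"
    and hyp: "AE y in lebesgue. y \<in> {p<..p+d/4} \<longrightarrow> c \<le> psi y"
    and xO: "x \<in> {0<..<1}"
    and kx: "(LINT y:{0<..<1}|lebesgue. psi y * wtd w d x y) + M * sfun x \<le> ad w d x * psi x"
    and kap: "\<And>y. y \<in> {p<..p+d/4} \<Longrightarrow> kap \<le> wtd w d x y"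
  shows "c * kap * (d/4) / C0 \<le> psi x"
proof -
  have i: "set_integrable lebesgue {0<..<1} (\<lambda>y. indicator {p<..p+d/4} y * (c*kap))"
    using p dpos by (intro ind_int) auto
  have v: "(LINT y:{0<..<1}|lebesgue. indicator {p<..p+d/4} y * (c*kap)) = (p + d/4 - p) * (c*kap)"
    using p dpos by (intro ind_int) auto
  have "(LINT y:{0<..<1}|lebesgue. indicator {p<..p+d/4} y * (c*kap)) \<le> (LINT y:{0<..<1}|lebesgue. psi y * wtd w d x y)"
  proof (rule set_integral_mono_AE[OF i wtd_k])
    show "AE y\<in>{0<..<1} in lebesgue. indicator {p<..p+d/4} y * (c*kap) \<le> psi y * wtd w d x y"
      using psi_nn hyp
    proof eventually_elim
      case (elim y)
      show ?case
      proof
        assume y: "y \<in> {0<..<1}"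
        show "indicator {p<..p+d/4} y * (c*kap) \<le> psi y * wtd w d x y"
        proof (cases "y \<in> {p<..p+d/4}")
          case True
          have "c * kap \<le> psi y * wtd w d x y"
            using True elim c kap_pos kap[OF True] by (intro mult_mono) auto
          then show ?thesis using True by simp
        next
          case False then show ?thesis using elim y wtd_nn[of x y] by simp
        qed
      qed
    qed
  qed
  moreover have "0 \<le> M * sfun x" using A2s[OF xO] Mpos by simp
  moreover have "(p + d/4 - p) * (c*kap) = c * kap * (d/4)" by simp
  ultimately have "c * kap * (d/4) \<le> ad w d x * psi x" using v kx by linarith
  then show ?thesis
    using ad_pos[OF xO] ad_le[of x] c kap_pos dpos by (intro divlb[where a="ad w d x"]) auto
qed

end

context MPc begin

definition rho where "rho = min 1 (kap*(d/4)/C0)"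
definition c0 where "c0 = M*(bl*d/2)/C0"
definition en where "en n = min (3*d/4 + real n * d/4) (1 - d/2)"

lemma rho_pos: "0 < rho" unfolding rho_def using kap_pos C0_pos dpos by simp
lemma rho_le: "rho \<le> kap*(d/4)/C0" unfolding rho_def by simp
lemma c0_pos: "0 < c0" unfolding c0_def using Mpos bl_pos dpos C0_pos by simp

lemma en0: "en 0 = 3*d/4" unfolding en_def using dlt by simp
lemma en_ge: "3*d/4 \<le> en n" unfolding en_def using dlt dpos by simp
lemma en_le: "en n \<le> 1 - d/2" unfolding en_def by simp
lemma minle: "0 \<le> t \<Longrightarrow> min (a+t) b \<le> min a b + (t::real)" by (simp add: min_def)

lemma en_Suc: "en (Suc n) \<le> en n + d/4"
proof -
  have e: "3*d/4 + real (Suc n)*d/4 = (3*d/4 + real n * d/4) + d/4" by (simp add: field_simps)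
  show ?thesis unfolding en_def e by (rule minle) (use dpos in simp)
qed

lemma chain: "AE x in lebesgue. x \<in> {d/2..en n} \<longrightarrow> c0 * rho^n \<le> psi x"
proof (induction n)
  case 0
  show ?case using J0 unfolding en0 c0_def by simp
next
  case (Suc n)
  let ?c = "c0 * rho^n"
  have c: "0 \<le> ?c" using c0_pos rho_pos by simp
  show ?case
    using key
  proof eventually_elim
    case (elim x)
    show ?case
    proof
      assume x: "x \<in> {d/2..en (Suc n)}"
      have xO: "x \<in> {0<..<1}" using x en_le[of "Suc n"] dpos dlt by auto
      define q where "q = min (max x (3*d/4)) (en n)"
      have q1: "3*d/4 \<le> q" "q \<le> en n" using en_ge[of n] by (auto simp: q_def)
      have q2: "q \<le> x + d/2" "x \<le> q + d/4"
        using x en_Suc[of n] dpos by (auto simp: q_def min_def max_def)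
      have hyp: "AE y in lebesgue. y \<in> {q - d/4<..q - d/4 + d/4} \<longrightarrow> ?c \<le> psi y"
        using Suc.IH by eventually_elim (use q1 dpos in auto)
      have kx: "kap \<le> wtd w d x y" if y: "y \<in> {q - d/4<..q - d/4 + d/4}" for y
      proof (rule wtd_core)
        show "d/2 \<le> x" "x \<le> 1 - d/2" using x en_le[of "Suc n"] by auto
        show "\<bar>y - x\<bar> \<le> d/2" unfolding abs_le_iff using y q2 by auto
      qed
      have "?c * kap * (d/4) / C0 \<le> psi x"
        by (rule propag[OF c _ _ hyp xO _ kx]) (use q1 dpos en_le[of n] elim xO in auto)
      moreover have "?c * rho \<le> ?c * kap * (d/4) / C0"
        using mult_left_mono[OF rho_le c] by simp
      ultimately show "c0 * rho ^ Suc n \<le> psi x" by (simp add: algebra_simps)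
    qed
  qed
qed

definition NN where "NN = nat \<lceil>4/d\<rceil>"

lemma enN: "en NN = 1 - d/2"
proof -
  have "4/d \<le> real NN" unfolding NN_def by linarith
  then have "1 \<le> real NN * d / 4" using dpos by (simp add: field_simps)
  then show ?thesis unfolding en_def using dpos by auto
qed

definition cN where "cN = c0 * rho ^ NN"

lemma cN_pos: "0 < cN" unfolding cN_def using c0_pos rho_pos by simp

lemma core: "AE x in lebesgue. x \<in> {d/2..1-d/2} \<longrightarrow> cN \<le> psi x"
  using chain[of NN] unfolding enN cN_def .

lemma strip_left:
  assumes m: "0 < m" "m \<le> M" and coreH: "AE x in lebesgue. x \<in> {d/2..1-d/2} \<longrightarrow> m \<le> psi x"
  shows "AE x in lebesgue. x \<in> {0<..<d/2} \<longrightarrow> m \<le> psi x"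
proof -
  have lo: "AE x in lebesgue. x \<in> {0<..<d/2} \<longrightarrow> -M \<le> -psi x" using psi_le by auto
  have hi: "AE x in lebesgue. x \<in> {0<..<d/2} \<longrightarrow> -psi x \<le> 0"
    using psi_nn by eventually_elim (use dpos dlt in auto)
  obtain Mn where Mn1: "AE x in lebesgue. x \<in> {0<..<d/2} \<longrightarrow> -psi x \<le> Mn"
    and Mn2: "\<And>t. (AE x in lebesgue. x \<in> {0<..<d/2} \<longrightarrow> -psi x \<le> t) \<Longrightarrow> Mn \<le> t"
    using ess_sup[OF _ lo hi] dpos by auto
  define cs where "cs = - Mn"
  have csl: "AE y in lebesgue. y \<in> {0<..<d/2} \<longrightarrow> cs \<le> psi y"
    using Mn1 unfolding cs_def by eventually_elim auto
  define gm where "gm = d*bl/4"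
  have gm_pos: "0 < gm" unfolding gm_def using dpos bl_pos by simp
  have "m \<le> cs"
  proof (rule ccontr)
    assume "\<not> m \<le> cs"
    then have lt: "cs < m" by simp
    have "AE x in lebesgue. x \<in> {0<..<d/2} \<longrightarrow> -psi x \<le> Mn - (m - cs)*gm/C0"
      using key
    proof eventually_elim
      case (elim x)
      show ?case
      proof
        assume x: "x \<in> {0<..<d/2}"
        have xO: "x \<in> {0<..<1}" using x dlt by auto
        have kx: "(LINT y:{0<..<1}|lebesgue. psi y * wtd w d x y) + M * sfun x \<le> ad w d x * psi x"
          using elim xO by blast
        define L where "L = (LINT y:{0<..<1}|lebesgue. indicator {0<..d/2} y * wtd w d x y)"
        define R where "R = (LINT y:{0<..<1}|lebesgue. indicator {d/2<..<1} y * wtd w d x y)"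
        have iL: "set_integrable lebesgue {0<..<1} (\<lambda>y. indicator {0<..d/2} y * wtd w d x y)"
          by (rule wtd_ind_i) simp
        have iR: "set_integrable lebesgue {0<..<1} (\<lambda>y. indicator {d/2<..<1} y * wtd w d x y)"
          by (rule wtd_ind_i) simp
        have adsplit: "ad w d x = L + R + sfun x"
        proof -
          have "(LINT y:{0<..<1}|lebesgue. wtd w d x y) = (LINT y:{0<..<1}|lebesgue. indicator {0<..d/2} y * wtd w d x y + indicator {d/2<..<1} y * wtd w d x y)"
            by (intro set_lebesgue_integral_cong) (auto simp: indicator_def)
          also have "\<dots> = L + R" unfolding L_def R_def by (rule set_integral_add(2)[OF iL iR])
          finally show ?thesis unfolding sfun_def by simp
        qed
        have gL: "(\<lambda>y. indicator {0<..d/2} y * wtd w d x y) \<in> borel_measurable borel"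
          using wtd_meas[of x] by measurable
        have gR: "(\<lambda>y. indicator {d/2<..<1} y * wtd w d x y) \<in> borel_measurable borel"
          using wtd_meas[of x] by measurable
        have bL: "\<bar>indicator {0<..d/2} y * wtd w d x y\<bar> \<le> 2*C0" for y
          using wtd_le[of x y] wtd_nn[of x y] by (auto simp: indicator_def)
        have bR: "\<bar>indicator {d/2<..<1} y * wtd w d x y\<bar> \<le> 2*C0" for y
          using wtd_le[of x y] wtd_nn[of x y] by (auto simp: indicator_def)
        have pL: "set_integrable lebesgue {0<..<1} (\<lambda>y. psi y * (indicator {0<..d/2} y * wtd w d x y))"
          by (rule psi_k[OF gL bL])
        have pR: "set_integrable lebesgue {0<..<1} (\<lambda>y. psi y * (indicator {d/2<..<1} y * wtd w d x y))"
          by (rule psi_k[OF gR bR])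
        have psplit: "(LINT y:{0<..<1}|lebesgue. psi y * wtd w d x y) =
            (LINT y:{0<..<1}|lebesgue. psi y * (indicator {0<..d/2} y * wtd w d x y)) +
            (LINT y:{0<..<1}|lebesgue. psi y * (indicator {d/2<..<1} y * wtd w d x y))"
        proof -
          have "(LINT y:{0<..<1}|lebesgue. psi y * wtd w d x y) =
            (LINT y:{0<..<1}|lebesgue. psi y * (indicator {0<..d/2} y * wtd w d x y) + psi y * (indicator {d/2<..<1} y * wtd w d x y))"
            by (intro set_lebesgue_integral_cong) (auto simp: indicator_def)
          also have "\<dots> = (LINT y:{0<..<1}|lebesgue. psi y * (indicator {0<..d/2} y * wtd w d x y)) +
            (LINT y:{0<..<1}|lebesgue. psi y * (indicator {d/2<..<1} y * wtd w d x y))" by (rule set_integral_add(2)[OF pL pR])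
          finally show ?thesis .
        qed
        have hL: "cs * L \<le> (LINT y:{0<..<1}|lebesgue. psi y * (indicator {0<..d/2} y * wtd w d x y))"
        proof -
          have "(LINT y:{0<..<1}|lebesgue. cs * (indicator {0<..d/2} y * wtd w d x y)) \<le>
                (LINT y:{0<..<1}|lebesgue. psi y * (indicator {0<..d/2} y * wtd w d x y))"
          proof (rule set_integral_mono_AE[OF _ pL])
            show "set_integrable lebesgue {0<..<1} (\<lambda>y. cs * (indicator {0<..d/2} y * wtd w d x y))"
              using iL by auto
            show "AE y\<in>{0<..<1} in lebesgue. cs * (indicator {0<..d/2} y * wtd w d x y) \<le> psi y * (indicator {0<..d/2} y * wtd w d x y)"
              using csl AE_neq[of "d/2"]
            proof eventually_elim
              case (elim y)
              show ?case
              proof (cases "y \<in> {0<..d/2}")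
                case True
                then have "y \<in> {0<..<d/2}" using elim by auto
                then have "cs \<le> psi y" using elim by blast
                then show ?thesis using True wtd_nn[of x y] by (auto intro: mult_right_mono)
              qed (auto simp: indicator_def)
            qed
          qed
          then show ?thesis unfolding L_def by simp
        qed
        have hR: "m * R \<le> (LINT y:{0<..<1}|lebesgue. psi y * (indicator {d/2<..<1} y * wtd w d x y))"
        proof -
          have "(LINT y:{0<..<1}|lebesgue. m * (indicator {d/2<..<1} y * wtd w d x y)) \<le>
                (LINT y:{0<..<1}|lebesgue. psi y * (indicator {d/2<..<1} y * wtd w d x y))"
          proof (rule set_integral_mono_AE[OF _ pR])
            show "set_integrable lebesgue {0<..<1} (\<lambda>y. m * (indicator {d/2<..<1} y * wtd w d x y))"
              using iR by auto
            show "AE y\<in>{0<..<1} in lebesgue. m * (indicator {d/2<..<1} y * wtd w d x y) \<le> psi y * (indicator {d/2<..<1} y * wtd w d x y)"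
              using coreH
            proof eventually_elim
              case (elim y)
              show ?case
              proof (cases "y \<in> {d/2<..<1} \<and> \<bar>y - x\<bar> < d")
                case True
                then have "y \<in> {d/2..1-d/2}" using x dlt by auto
                then have "m \<le> psi y" using elim by blast
                then show ?thesis using True wtd_nn[of x y] by (auto intro: mult_right_mono)
              next
                case False
                then have "indicator {d/2<..<1} y * wtd w d x y = 0"
                  using wtd_zero[where x=x and y=y] by (auto simp: indicator_def)
                then show ?thesis by (metis mult_zero_right order_refl)
              qed
            qed
          qed
          then show ?thesis unfolding R_def by simp
        qed
        have G: "gm \<le> R + sfun x" using G_left[of x] x A2s[OF xO] unfolding Gl_def R_def gm_def by auto
        have s0: "0 \<le> sfun x" using A2s[OF xO] .
        have Ms: "m * sfun x \<le> M * sfun x" using m s0 by (intro mult_right_mono) auto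
        have e1: "(m - cs) * gm \<le> (m - cs) * (R + sfun x)" using lt G by (intro mult_left_mono) auto
        have e2: "(m - cs) * (R + sfun x) = m * R + m * sfun x - cs * R - cs * sfun x" by (simp add: algebra_simps)
        have e3: "cs * ad w d x = cs * L + cs * R + cs * sfun x" unfolding adsplit by (simp add: algebra_simps)
        have main: "(m - cs) * gm \<le> ad w d x * (psi x - cs)"
          using kx psplit hL hR Ms e1 e2 e3 by (simp add: algebra_simps)
        have "(m - cs) * gm / C0 \<le> psi x - cs"
          using ad_pos[OF xO] ad_le[of x] lt gm_pos main by (intro divlb[where a="ad w d x"]) auto
        then show "-psi x \<le> Mn - (m - cs)*gm/C0" unfolding cs_def by simp
      qed
    qed
    then have "Mn \<le> Mn - (m - cs)*gm/C0" by (rule Mn2)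
    moreover have "0 < (m - cs)*gm/C0" using lt gm_pos C0_pos by simp
    ultimately show False by linarith
  qed
  then have mc: "m \<le> cs" .
  show ?thesis using csl by eventually_elim (use mc in auto)
qed

lemma strip_right:
  assumes m: "0 < m" "m \<le> M" and coreH: "AE x in lebesgue. x \<in> {d/2..1-d/2} \<longrightarrow> m \<le> psi x"
  shows "AE x in lebesgue. x \<in> {1-d/2<..<1} \<longrightarrow> m \<le> psi x"
proof -
  have lo: "AE x in lebesgue. x \<in> {1-d/2<..<1} \<longrightarrow> -M \<le> -psi x" using psi_le by auto
  have hi: "AE x in lebesgue. x \<in> {1-d/2<..<1} \<longrightarrow> -psi x \<le> 0"
    using psi_nn by eventually_elim (use dpos dlt in auto)
  obtain Mn where Mn1: "AE x in lebesgue. x \<in> {1-d/2<..<1} \<longrightarrow> -psi x \<le> Mn"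
    and Mn2: "\<And>t. (AE x in lebesgue. x \<in> {1-d/2<..<1} \<longrightarrow> -psi x \<le> t) \<Longrightarrow> Mn \<le> t"
    using ess_sup[OF _ lo hi] dpos by auto
  define cs where "cs = - Mn"
  have csl: "AE y in lebesgue. y \<in> {1-d/2<..<1} \<longrightarrow> cs \<le> psi y"
    using Mn1 unfolding cs_def by eventually_elim auto
  define gm where "gm = d*bl/4"
  have gm_pos: "0 < gm" unfolding gm_def using dpos bl_pos by simp
  have "m \<le> cs"
  proof (rule ccontr)
    assume "\<not> m \<le> cs"
    then have lt: "cs < m" by simp
    have "AE x in lebesgue. x \<in> {1-d/2<..<1} \<longrightarrow> -psi x \<le> Mn - (m - cs)*gm/C0"
      using key
    proof eventually_elim
      case (elim x)
      show ?case
      proof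
        assume x: "x \<in> {1-d/2<..<1}"
        have xO: "x \<in> {0<..<1}" using x dlt dpos by auto
        have kx: "(LINT y:{0<..<1}|lebesgue. psi y * wtd w d x y) + M * sfun x \<le> ad w d x * psi x"
          using elim xO by blast
        define L where "L = (LINT y:{0<..<1}|lebesgue. indicator {1-d/2<..<1} y * wtd w d x y)"
        define R where "R = (LINT y:{0<..<1}|lebesgue. indicator {0<..1-d/2} y * wtd w d x y)"
        have iL: "set_integrable lebesgue {0<..<1} (\<lambda>y. indicator {1-d/2<..<1} y * wtd w d x y)"
          by (rule wtd_ind_i) simp
        have iR: "set_integrable lebesgue {0<..<1} (\<lambda>y. indicator {0<..1-d/2} y * wtd w d x y)"
          by (rule wtd_ind_i) simp
        have adsplit: "ad w d x = L + R + sfun x"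
        proof -
          have "(LINT y:{0<..<1}|lebesgue. wtd w d x y) = (LINT y:{0<..<1}|lebesgue. indicator {1-d/2<..<1} y * wtd w d x y + indicator {0<..1-d/2} y * wtd w d x y)"
            by (intro set_lebesgue_integral_cong) (auto simp: indicator_def)
          also have "\<dots> = L + R" unfolding L_def R_def by (rule set_integral_add(2)[OF iL iR])
          finally show ?thesis unfolding sfun_def by simp
        qed
        have gL: "(\<lambda>y. indicator {1-d/2<..<1} y * wtd w d x y) \<in> borel_measurable borel"
          using wtd_meas[of x] by measurable
        have gR: "(\<lambda>y. indicator {0<..1-d/2} y * wtd w d x y) \<in> borel_measurable borel"
          using wtd_meas[of x] by measurable
        have bL: "\<bar>indicator {1-d/2<..<1} y * wtd w d x y\<bar> \<le> 2*C0" for y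
          using wtd_le[of x y] wtd_nn[of x y] by (auto simp: indicator_def)
        have bR: "\<bar>indicator {0<..1-d/2} y * wtd w d x y\<bar> \<le> 2*C0" for y
          using wtd_le[of x y] wtd_nn[of x y] by (auto simp: indicator_def)
        have pL: "set_integrable lebesgue {0<..<1} (\<lambda>y. psi y * (indicator {1-d/2<..<1} y * wtd w d x y))"
          by (rule psi_k[OF gL bL])
        have pR: "set_integrable lebesgue {0<..<1} (\<lambda>y. psi y * (indicator {0<..1-d/2} y * wtd w d x y))"
          by (rule psi_k[OF gR bR])
        have psplit: "(LINT y:{0<..<1}|lebesgue. psi y * wtd w d x y) =
            (LINT y:{0<..<1}|lebesgue. psi y * (indicator {1-d/2<..<1} y * wtd w d x y)) +
            (LINT y:{0<..<1}|lebesgue. psi y * (indicator {0<..1-d/2} y * wtd w d x y))"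
        proof -
          have "(LINT y:{0<..<1}|lebesgue. psi y * wtd w d x y) =
            (LINT y:{0<..<1}|lebesgue. psi y * (indicator {1-d/2<..<1} y * wtd w d x y) + psi y * (indicator {0<..1-d/2} y * wtd w d x y))"
            by (intro set_lebesgue_integral_cong) (auto simp: indicator_def)
          also have "\<dots> = (LINT y:{0<..<1}|lebesgue. psi y * (indicator {1-d/2<..<1} y * wtd w d x y)) +
            (LINT y:{0<..<1}|lebesgue. psi y * (indicator {0<..1-d/2} y * wtd w d x y))" by (rule set_integral_add(2)[OF pL pR])
          finally show ?thesis .
        qed
        have hL: "cs * L \<le> (LINT y:{0<..<1}|lebesgue. psi y * (indicator {1-d/2<..<1} y * wtd w d x y))"
        proof -
          have "(LINT y:{0<..<1}|lebesgue. cs * (indicator {1-d/2<..<1} y * wtd w d x y)) \<le>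
                (LINT y:{0<..<1}|lebesgue. psi y * (indicator {1-d/2<..<1} y * wtd w d x y))"
          proof (rule set_integral_mono_AE[OF _ pL])
            show "set_integrable lebesgue {0<..<1} (\<lambda>y. cs * (indicator {1-d/2<..<1} y * wtd w d x y))"
              using iL by auto
            show "AE y\<in>{0<..<1} in lebesgue. cs * (indicator {1-d/2<..<1} y * wtd w d x y) \<le> psi y * (indicator {1-d/2<..<1} y * wtd w d x y)"
              using csl AE_neq[of "d/2"]
            proof eventually_elim
              case (elim y)
              show ?case
              proof (cases "y \<in> {1-d/2<..<1}")
                case True
                then have "y \<in> {1-d/2<..<1}" by auto
                then have "cs \<le> psi y" using elim by blast
                then show ?thesis using True wtd_nn[of x y] by (auto intro: mult_right_mono)
              qed (auto simp: indicator_def)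
            qed
          qed
          then show ?thesis unfolding L_def by simp
        qed
        have hR: "m * R \<le> (LINT y:{0<..<1}|lebesgue. psi y * (indicator {0<..1-d/2} y * wtd w d x y))"
        proof -
          have "(LINT y:{0<..<1}|lebesgue. m * (indicator {0<..1-d/2} y * wtd w d x y)) \<le>
                (LINT y:{0<..<1}|lebesgue. psi y * (indicator {0<..1-d/2} y * wtd w d x y))"
          proof (rule set_integral_mono_AE[OF _ pR])
            show "set_integrable lebesgue {0<..<1} (\<lambda>y. m * (indicator {0<..1-d/2} y * wtd w d x y))"
              using iR by auto
            show "AE y\<in>{0<..<1} in lebesgue. m * (indicator {0<..1-d/2} y * wtd w d x y) \<le> psi y * (indicator {0<..1-d/2} y * wtd w d x y)"
              using coreH
            proof eventually_elim
              case (elim y)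
              show ?case
              proof (cases "y \<in> {0<..1-d/2} \<and> \<bar>y - x\<bar> < d")
                case True
                then have "y \<in> {d/2..1-d/2}" using x dlt by auto
                then have "m \<le> psi y" using elim by blast
                then show ?thesis using True wtd_nn[of x y] by (auto intro: mult_right_mono)
              next
                case False
                then have "indicator {0<..1-d/2} y * wtd w d x y = 0"
                  using wtd_zero[where x=x and y=y] by (auto simp: indicator_def)
                then show ?thesis by (metis mult_zero_right order_refl)
              qed
            qed
          qed
          then show ?thesis unfolding R_def by simp
        qed
        have G: "gm \<le> R + sfun x" using G_right[of x] x A2s[OF xO] unfolding Gr_def R_def gm_def by auto
        have s0: "0 \<le> sfun x" using A2s[OF xO] .
        have Ms: "m * sfun x \<le> M * sfun x" using m s0 by (intro mult_right_mono) auto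
        have e1: "(m - cs) * gm \<le> (m - cs) * (R + sfun x)" using lt G by (intro mult_left_mono) auto
        have e2: "(m - cs) * (R + sfun x) = m * R + m * sfun x - cs * R - cs * sfun x" by (simp add: algebra_simps)
        have e3: "cs * ad w d x = cs * L + cs * R + cs * sfun x" unfolding adsplit by (simp add: algebra_simps)
        have main: "(m - cs) * gm \<le> ad w d x * (psi x - cs)"
          using kx psplit hL hR Ms e1 e2 e3 by (simp add: algebra_simps)
        have "(m - cs) * gm / C0 \<le> psi x - cs"
          using ad_pos[OF xO] ad_le[of x] lt gm_pos main by (intro divlb[where a="ad w d x"]) auto
        then show "-psi x \<le> Mn - (m - cs)*gm/C0" unfolding cs_def by simp
      qed
    qed
    then have "Mn \<le> Mn - (m - cs)*gm/C0" by (rule Mn2)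
    moreover have "0 < (m - cs)*gm/C0" using lt gm_pos C0_pos by simp
    ultimately show False by linarith
  qed
  then have mc: "m \<le> cs" .
  show ?thesis using csl by eventually_elim (use mc in auto)
qed

end

context MPc begin

lemma contra: False
proof -
  define m where "m = min cN M"
  have m: "0 < m" "m \<le> M" using cN_pos Mpos by (auto simp: m_def)
  have cH: "AE x in lebesgue. x \<in> {d/2..1-d/2} \<longrightarrow> m \<le> psi x"
    using core by eventually_elim (auto simp: m_def)
  have "AE x in lebesgue. x \<in> {0<..<1} \<longrightarrow> m \<le> psi x"
    using cH strip_left[OF m cH] strip_right[OF m cH]
  proof eventually_elim
    case (elim x)
    show ?case
    proof
      assume x: "x \<in> {0<..<1}"
      consider "x < d/2" | "d/2 \<le> x \<and> x \<le> 1 - d/2" | "1 - d/2 < x" by linarith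
      then show "m \<le> psi x" using elim x by cases auto
    qed
  qed
  then have "AE x in lebesgue. x \<in> {0<..<1} \<longrightarrow> phi x \<le> M - m"
    by eventually_elim (auto simp: psi_def)
  then have "M \<le> M - m" by (rule Mmin)
  with m show False by linarith
qed

end

context S begin

lemma MP:
  fixes phi :: "real \<Rightarrow> real"
  assumes pint: "set_integrable lebesgue {0<..<1} phi"
    and pnn: "\<And>y. 0 \<le> phi y"
    and sub: "AE x in lebesgue. x \<in> {0<..<1} \<longrightarrow> ad w d x * phi x \<le> (LINT y:{0<..<1}|lebesgue. phi y * wtd w d x y)"
    and A2s: "\<And>x. x \<in> {0<..<1} \<Longrightarrow> 0 \<le> sfun x"
  shows "AE x in lebesgue. x \<in> {0<..<1} \<longrightarrow> phi x \<le> 0"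
proof -
  define Bd where "Bd = 2*C0*(LINT y:{0<..<1}|lebesgue. phi y)/al"
  have hi: "AE x in lebesgue. x \<in> {0<..<1} \<longrightarrow> phi x \<le> Bd"
    using sub
  proof eventually_elim
    case (elim x)
    show ?case
    proof
      assume x: "x \<in> {0<..<1}"
      have i1: "set_integrable lebesgue {0<..<1} (\<lambda>y. phi y * wtd w d x y)"
        by (rule int_mult_bdd[OF pint to_leb[OF wtd_meas], where C="2*C0"]) (use wtd_nn wtd_le in auto)
      have i2: "set_integrable lebesgue {0<..<1} (\<lambda>y. phi y * (2*C0))"
        using pint by auto
      have "(LINT y:{0<..<1}|lebesgue. phi y * wtd w d x y) \<le> (LINT y:{0<..<1}|lebesgue. phi y * (2*C0))"
        by (rule set_integral_mono[OF i1 i2]) (use pnn wtd_le in \<open>auto intro: mult_left_mono\<close>)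
      then have a: "ad w d x * phi x \<le> 2*C0*(LINT y:{0<..<1}|lebesgue. phi y)"
        using elim x by (simp add: mult.commute)
      have "al * phi x \<le> ad w d x * phi x" using ad_lb[of x] x pnn[of x] by (intro mult_right_mono) auto
      with a have "al * phi x \<le> 2*C0*(LINT y:{0<..<1}|lebesgue. phi y)" by linarith
      then show "phi x \<le> Bd" unfolding Bd_def using al_pos by (simp add: pos_le_divide_eq mult.commute)
    qed
  qed
  have lo: "AE x in lebesgue. x \<in> {0<..<1} \<longrightarrow> 0 \<le> phi x" using pnn by simp
  obtain M where M1: "AE x in lebesgue. x \<in> {0<..<1} \<longrightarrow> phi x \<le> M"
    and M2: "\<forall>t. (AE x in lebesgue. x \<in> {0<..<1} \<longrightarrow> phi x \<le> t) \<longrightarrow> M \<le> t"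
    using ess_sup[OF _ lo hi] by auto
  show ?thesis
  proof (cases "M \<le> 0")
    case True show ?thesis using M1 by eventually_elim (use True in auto)
  next
    case False
    interpret MPc w d phi M
      by unfold_locales (use A1w dpos dlt pint pnn sub A2s M1 M2 False in auto)
    from contra show ?thesis ..
  qed
qed

lemma kato:
  fixes u v f :: "real \<Rightarrow> real"
  assumes ui: "set_integrable lebesgue {0<..<1} u" and vi: "set_integrable lebesgue {0<..<1} v"
    and x: "x \<in> {0<..<1}"
    and hN: "Nt w d u x = f x" and hP: "Pt w d v x = \<bar>f x\<bar>"
  shows "ad w d x * max 0 (\<bar>u x\<bar> - v x) \<le> (LINT y:{0<..<1}|lebesgue. max 0 (\<bar>u y\<bar> - v y) * wtd w d x y)"
proof -
  define kc where "kc = (\<lambda>y. wd w d x y - bd w d x * indicator {0..d} \<bar>y - x\<bar>)"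
  have kcm: "kc \<in> borel_measurable borel" unfolding kc_def using wd_meas[of x] by measurable
  have kcb: "\<bar>kc y\<bar> \<le> 2*C0" for y
  proof -
    have "0 \<le> bd w d x * indicator {0..d} \<bar>y - x\<bar>" "bd w d x * indicator {0..d} \<bar>y - x\<bar> \<le> C0"
      using bd_nn[of x] bd_le[of x] by (auto simp: indicator_def)
    then show ?thesis unfolding kc_def using wd_nn[of x y] wd_le[of x y] unfolding C0_def by linarith
  qed
  have ik: "set_integrable lebesgue {0<..<1} (\<lambda>y. u y * kc y)"
    by (rule int_mult_bdd[OF ui to_leb[OF kcm] kcb])
  have ik2: "set_integrable lebesgue {0<..<1} (\<lambda>y. (-1) * (u y * kc y))" by (rule set_integrable_mult_right) (rule ik)
  have iua: "set_integrable lebesgue {0<..<1} (\<lambda>y. \<bar>u y\<bar> * wtd w d x y)"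
    by (rule int_mult_bdd[OF set_integrable_abs[OF ui] to_leb[OF wtd_meas], where C="2*C0"]) (use wtd_nn wtd_le in auto)
  have iv: "set_integrable lebesgue {0<..<1} (\<lambda>y. v y * wtd w d x y)"
    by (rule int_mult_bdd[OF vi to_leb[OF wtd_meas], where C="2*C0"]) (use wtd_nn wtd_le in auto)
  have AE3: "AE y in lebesgue. y \<noteq> x \<and> y \<noteq> x - d \<and> y \<noteq> x + d"
    using AE_neq[of x] AE_neq[of "x-d"] AE_neq[of "x+d"] by eventually_elim auto
  have kcabs: "\<bar>kc y\<bar> = wtd w d x y" if "y \<noteq> x" "y \<noteq> x - d" "y \<noteq> x + d" for y
  proof -
    have "\<bar>y - x\<bar> \<noteq> 0" "\<bar>y - x\<bar> \<noteq> d" using that by (auto simp: abs_if split: if_splits)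
    then have "indicator {0..d} \<bar>y - x\<bar> = (indicator {0<..<d} \<bar>y - x\<bar> :: real)"
      by (auto simp: indicator_def)
    then show ?thesis unfolding kc_def wtd_def by simp
  qed
  have pw: "AE y in lebesgue. y \<in> {0<..<1} \<longrightarrow> u y * kc y \<le> \<bar>u y\<bar> * wtd w d x y \<and> (-1) * (u y * kc y) \<le> \<bar>u y\<bar> * wtd w d x y"
    using AE3
  proof eventually_elim
    case (elim y)
    have "\<bar>u y * kc y\<bar> = \<bar>u y\<bar> * wtd w d x y" using kcabs elim by (simp add: abs_mult)
    then show ?case by (auto simp: abs_le_iff)
  qed
  have I1a: "(LINT y:{0<..<1}|lebesgue. u y * kc y) \<le> (LINT y:{0<..<1}|lebesgue. \<bar>u y\<bar> * wtd w d x y)"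
    by (rule set_integral_mono_AE[OF ik iua]) (use pw in \<open>eventually_elim, auto\<close>)
  have I1b: "(LINT y:{0<..<1}|lebesgue. (-1) * (u y * kc y)) \<le> (LINT y:{0<..<1}|lebesgue. \<bar>u y\<bar> * wtd w d x y)"
    by (rule set_integral_mono_AE[OF ik2 iua]) (use pw in \<open>eventually_elim, auto\<close>)
  define I1 where "I1 = (LINT y:{0<..<1}|lebesgue. u y * kc y)"
  define J where "J = (LINT y:{0<..<1}|lebesgue. \<bar>u y\<bar> * wtd w d x y)"
  define K where "K = (LINT y:{0<..<1}|lebesgue. v y * wtd w d x y)"
  have neg: "(LINT y:{0<..<1}|lebesgue. (-1) * (u y * kc y)) = (-1) * (LINT y:{0<..<1}|lebesgue. u y * kc y)"
    by (rule set_integral_mult_right)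
  have absI: "\<bar>I1\<bar> \<le> J" using I1a I1b neg unfolding I1_def J_def abs_le_iff by linarith
  have eN: "ad w d x * u x - I1 = f x" using hN unfolding Nt_def I1_def kc_def by simp
  have eP: "ad w d x * v x - K = \<bar>f x\<bar>" using hP unfolding Pt_def K_def by simp
  have ad0: "0 \<le> ad w d x" using ad_lb[of x] x al_pos by simp
  have "f x + I1 = ad w d x * u x" using eN by linarith
  then have "ad w d x * \<bar>u x\<bar> = \<bar>f x + I1\<bar>" using ad0 by (simp add: abs_mult)
  also have "\<dots> \<le> \<bar>f x\<bar> + J" using absI by linarith
  finally have A: "ad w d x * (\<bar>u x\<bar> - v x) \<le> J - K" using eP by (simp add: algebra_simps)
  have "J - K = (LINT y:{0<..<1}|lebesgue. (\<bar>u y\<bar> - v y) * wtd w d x y)"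
  proof -
    have "J - K = (LINT y:{0<..<1}|lebesgue. \<bar>u y\<bar> * wtd w d x y - v y * wtd w d x y)"
      unfolding J_def K_def by (rule set_integral_diff(2)[OF iua iv, symmetric])
    also have "\<dots> = (LINT y:{0<..<1}|lebesgue. (\<bar>u y\<bar> - v y) * wtd w d x y)"
      by (simp add: algebra_simps)
    finally show ?thesis .
  qed
  also have "\<dots> \<le> (LINT y:{0<..<1}|lebesgue. max 0 (\<bar>u y\<bar> - v y) * wtd w d x y)"
  proof (rule set_integral_mono)
    show "set_integrable lebesgue {0<..<1} (\<lambda>y. (\<bar>u y\<bar> - v y) * wtd w d x y)"
      using set_integral_diff(1)[OF iua iv] by (simp add: algebra_simps)
    have "set_integrable lebesgue {0<..<1} (\<lambda>y. \<bar>u y\<bar> - v y)"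
      using set_integral_diff(1)[OF set_integrable_abs[OF ui] vi] .
    then have gi: "set_integrable lebesgue {0<..<1} (\<lambda>y. max 0 (\<bar>u y\<bar> - v y))"
    proof -
      assume g: "set_integrable lebesgue {0<..<1} (\<lambda>y. \<bar>u y\<bar> - v y)"
      have "set_integrable lebesgue {0<..<1} (\<lambda>y. ((\<bar>u y\<bar> - v y) + \<bar>\<bar>u y\<bar> - v y\<bar>) / 2)"
        using set_integral_add(1)[OF g set_integrable_abs[OF g]] by auto
      moreover have "(\<lambda>y. ((\<bar>u y\<bar> - v y) + \<bar>\<bar>u y\<bar> - v y\<bar>) / 2) = (\<lambda>y. max 0 (\<bar>u y\<bar> - v y))"
        by (auto simp: fun_eq_iff max_def)
      ultimately show ?thesis by simp
    qed
    show "set_integrable lebesgue {0<..<1} (\<lambda>y. max 0 (\<bar>u y\<bar> - v y) * wtd w d x y)"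
      by (rule int_mult_bdd[OF gi to_leb[OF wtd_meas], where C="2*C0"]) (use wtd_nn wtd_le in auto)
    show "(\<bar>u y\<bar> - v y) * wtd w d x y \<le> max 0 (\<bar>u y\<bar> - v y) * wtd w d x y" for y
      using wtd_nn[of x y] by (intro mult_right_mono) auto
  qed
  finally have B: "ad w d x * (\<bar>u x\<bar> - v x) \<le> (LINT y:{0<..<1}|lebesgue. max 0 (\<bar>u y\<bar> - v y) * wtd w d x y)"
    using A by linarith
  show ?thesis
  proof (cases "0 \<le> \<bar>u x\<bar> - v x")
    case True then show ?thesis using B by simp
  next
    case False
    have "0 \<le> (LINT y:{0<..<1}|lebesgue. max 0 (\<bar>u y\<bar> - v y) * wtd w d x y)"
      by (rule set_int_nonneg) (use wtd_nn in simp)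
    then show ?thesis using False by simp
  qed
qed

end

lemma L2_int:
  assumes "L2_Omega u"
  shows "set_integrable lebesgue {0<..<1} u"
proof (rule set_integrable_bound[where f="\<lambda>y. 1 + (u y)^2"])
  have a: "set_integrable lebesgue {0<..<1} (\<lambda>y. (u y)^2)" using assms unfolding L2_Omega_def Omega_def by simp
  show "set_integrable lebesgue {0<..<1} (\<lambda>y. 1 + (u y)^2)"
    by (rule set_integral_add(1)[OF const_intg a])
  show "set_borel_measurable lebesgue {0<..<1} u" using assms unfolding L2_Omega_def Omega_def by simp
  have "\<bar>u y\<bar> \<le> 1 + (u y)^2" for y
  proof (cases "\<bar>u y\<bar> \<le> 1")
    case True then show ?thesis by (simp add: add_increasing2)
  next
    case False
    then have "\<bar>u y\<bar> * 1 \<le> \<bar>u y\<bar> * \<bar>u y\<bar>" by (intro mult_left_mono) auto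
    then show ?thesis by (simp add: power2_eq_square)
  qed
  then show "AE y in lebesgue. y \<in> {0<..<1} \<longrightarrow> norm (u y) \<le> norm (1 + (u y)^2)" by auto
qed

theorem mainTheorem4:
  fixes w :: "real \<Rightarrow> real" and \<delta> :: real and f u v :: "real \<Rightarrow> real"
  assumes "A1 w"
    and "0 < \<delta>" and "\<delta> < 1/2"
    and A2: "\<forall>x\<in>Omega. ad w \<delta> x \<ge> set_lebesgue_integral lebesgue Omega (\<lambda>y. wtd w \<delta> x y)"
    and "L2_Omega f"
    and "L2_Omega u" and "AE x in lebesgue. x \<in> Omega \<longrightarrow> Nt w \<delta> u x = f x"
    and "L2_Omega v" and "AE x in lebesgue. x \<in> Omega \<longrightarrow> Pt w \<delta> v x = \<bar>f x\<bar>"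
  shows "AE x in lebesgue. x \<in> Omega \<longrightarrow> \<bar>u x\<bar> \<le> 2 * v x"
proof -
  interpret S w \<delta> by unfold_locales (use assms in auto)
  have ui: "set_integrable lebesgue {0<..<1} u" using L2_int assms(6) .
  have vi: "set_integrable lebesgue {0<..<1} v" using L2_int assms(8) .
  define phi where "phi = (\<lambda>y. max 0 (\<bar>u y\<bar> - v y))"
  have pint: "set_integrable lebesgue {0<..<1} phi"
  proof -
    have g: "set_integrable lebesgue {0<..<1} (\<lambda>y. \<bar>u y\<bar> - v y)"
      using set_integral_diff(1)[OF set_integrable_abs[OF ui] vi] .
    have "set_integrable lebesgue {0<..<1} (\<lambda>y. ((\<bar>u y\<bar> - v y) + \<bar>\<bar>u y\<bar> - v y\<bar>) / 2)"
      using set_integral_add(1)[OF g set_integrable_abs[OF g]] by auto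
    moreover have "(\<lambda>y. ((\<bar>u y\<bar> - v y) + \<bar>\<bar>u y\<bar> - v y\<bar>) / 2) = phi"
      by (auto simp: fun_eq_iff max_def phi_def)
    ultimately show ?thesis by simp
  qed
  have pnn: "\<And>y. 0 \<le> phi y" by (simp add: phi_def)
  have sub: "AE x in lebesgue. x \<in> {0<..<1} \<longrightarrow> ad w \<delta> x * phi x \<le> (LINT y:{0<..<1}|lebesgue. phi y * wtd w \<delta> x y)"
    using assms(7) assms(9) unfolding Omega_def phi_def
    by eventually_elim (auto intro: kato[OF ui vi])
  have A2s: "\<And>x. x \<in> {0<..<1} \<Longrightarrow> 0 \<le> sfun x"
    using A2 unfolding Omega_def sfun_def by auto
  have "AE x in lebesgue. x \<in> {0<..<1} \<longrightarrow> phi x \<le> 0" by (rule MP[OF pint pnn sub A2s])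
  then show ?thesis unfolding Omega_def phi_def by eventually_elim auto
qed


end
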